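(* Let $q\in\mathbb C\setminus\{0\}$ not be a root of unity, $A=\mathbb C[x]$ the braided line and $\sigma=\sigma_\lambda$ ($\lambda\ne0$). Then for all $n\ge0$, $HC^{\Psi,\sigma}_{2n+1}(A)=0$ and $HC^{\Psi,\sigma}_{2n+2}(A)=\mathbb C[1]$, while $HC^{\Psi,\sigma}_0(A)=\mathbb C[1]$ if $\lambda\notin\{q^{-N}:N\in\{0,1,2,\dots\}\}$ and $HC^{\Psi,\sigma}_0(A)=\mathbb C[1]\oplus\mathbb C[x^{N+1}]$ if $\lambda=q^{-N}$.
   Context: $H=\mathbb C[t,t^{-1}]$ with $\Delta(t)=t\otimes t$, $\mathbf r(t^m,t^n)=q^{mn}$; $A=\mathbb C[x]$ with coaction $x^m\mapsto x^m\otimes t^m$, braiding $\Psi(x^m\otimes x^n)=q^{mn}x^n\otimes x^m$, primitive $x$ ($\Delta x=x\otimes1+1\otimes x$, $\varepsilon(x)=0$, $S(x)=-x$). $\sigma_\lambda(x^n)=\lambda^nq^{n(n-1)}x^n$. Composition right to left; on $A^{\otimes(n+1)}$ (factors $0,\dots,n$), $f_{i,i+1}$ is $f$ on factors $i,i+1$, $\Psi_{[0,n-1],n}=\Psi_{0,1}\cdots\Psi_{n-1,n}$. Faces $d_j=\mu_{j,j+1}$ ($0\le j\le n-1$), $d_n=\mu_{0,1}(\sigma\otimes\mathrm{id}^{\otimes n})\Psi_{[0,n-1],n}$; degeneracies $s_i=\mathrm{id}^{\otimes(i+1)}\otimes\eta\otimes\mathrm{id}^{\otimes(n-i)}$; cyclic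 operators $t_n=(\sigma\otimes\mathrm{id}^{\otimes n})\Psi_{[0,n-1],n}$, $T_n=t_n^{n+1}$. These descend to $C_n^{\Psi,\sigma}=\mathrm{coker}(\mathrm{id}-T_n)$, forming a cyclic vector space; $HC^{\Psi,\sigma}_*(A)$ is its cyclic homology in the sense of Connes. *)

theory Defs
  imports Complex_Main "HOL-Library.Function_Algebras"
begin

text \<open>Elements of A^{(n+1) tensor power}, A = C[x], are finitely supported
  functions on words [a_0,...,a_n] of exponents; the word w stands for the
  basis tensor x^{a_0} (x) ... (x) x^{a_n}.\<close>

definition tens :: "nat \<Rightarrow> (nat list \<Rightarrow> complex) set" where
  "tens n = {f. finite {w. f w \<noteq> 0} \<and> (\<forall>w. f w \<noteq> 0 \<longrightarrow> length w = Suc n)}"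

definition basis :: "nat list \<Rightarrow> nat list \<Rightarrow> complex" where
  "basis w = (\<lambda>v. if v = w then 1 else 0)"

definition scal :: "complex \<Rightarrow> (nat list \<Rightarrow> complex) \<Rightarrow> (nat list \<Rightarrow> complex)" where
  "scal c f = (\<lambda>w. c * f w)"

text \<open>Linear extension of a monomial map  e_w \<mapsto> c w * e_(\<pi> w).\<close>
definition mono_ext :: "(nat list \<Rightarrow> complex) \<Rightarrow> (nat list \<Rightarrow> nat list)
    \<Rightarrow> (nat list \<Rightarrow> complex) \<Rightarrow> (nat list \<Rightarrow> complex)" where
  "mono_ext c \<pi> f = (\<lambda>v. \<Sum>w \<in> {w. f w \<noteq> 0 \<and> \<pi> w = v}. c w * f w)"

definition psi :: "complex \<Rightarrow> nat \<Rightarrow> (nat list \<Rightarrow> complex) \<Rightarrow> (nat list \<Rightarrow> complex)" where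
  "psi q i = mono_ext (\<lambda>w. q ^ (w ! i * w ! Suc i)) (\<lambda>w. w[i := w ! Suc i, Suc i := w ! i])"

definition sigma_coef :: "complex \<Rightarrow> complex \<Rightarrow> nat \<Rightarrow> complex" where
  "sigma_coef l q a = l ^ a * q ^ (a * (a - 1))"

definition sigma0 :: "complex \<Rightarrow> complex \<Rightarrow> (nat list \<Rightarrow> complex) \<Rightarrow> (nat list \<Rightarrow> complex)" where
  "sigma0 l q = mono_ext (\<lambda>w. sigma_coef l q (hd w)) id"

definition mu :: "nat \<Rightarrow> (nat list \<Rightarrow> complex) \<Rightarrow> (nat list \<Rightarrow> complex)" where
  "mu j = mono_ext (\<lambda>_. 1) (\<lambda>w. take j w @ [w ! j + w ! Suc j] @ drop (Suc (Suc j)) w)"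

fun Psi_block :: "complex \<Rightarrow> nat \<Rightarrow> (nat list \<Rightarrow> complex) \<Rightarrow> (nat list \<Rightarrow> complex)" where
  "Psi_block q 0 = id"
| "Psi_block q (Suc k) = Psi_block q k \<circ> psi q k"

definition cyc :: "complex \<Rightarrow> complex \<Rightarrow> nat \<Rightarrow> (nat list \<Rightarrow> complex) \<Rightarrow> (nat list \<Rightarrow> complex)" where
  "cyc l q n = sigma0 l q \<circ> Psi_block q n"

definition Tcyc :: "complex \<Rightarrow> complex \<Rightarrow> nat \<Rightarrow> (nat list \<Rightarrow> complex) \<Rightarrow> (nat list \<Rightarrow> complex)" where
  "Tcyc l q n = cyc l q n ^^ Suc n"

definition face :: "complex \<Rightarrow> complex \<Rightarrow> nat \<Rightarrow> nat \<Rightarrow> (nat list \<Rightarrow> complex) \<Rightarrow> (nat list \<Rightarrow> complex)" where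
  "face l q n j = (if j < n then mu j else mu 0 \<circ> cyc l q n)"

definition bdry :: "complex \<Rightarrow> complex \<Rightarrow> nat \<Rightarrow> (nat list \<Rightarrow> complex) \<Rightarrow> (nat list \<Rightarrow> complex)" where
  "bdry l q n f = (\<Sum>j\<le>n. scal ((-1) ^ j) (face l q n j f))"

text \<open>Connes' complex C^lambda_n = C_n / (1 - (-1)^n t_n), with C_n = coker(id - T_n):
  the kernel of  A^{(n+1)} \<rightarrow> C^lambda_n  is  im(id - T_n) + im(id - (-1)^n t_n).\<close>
definition relW :: "complex \<Rightarrow> complex \<Rightarrow> nat \<Rightarrow> (nat list \<Rightarrow> complex) set" where
  "relW l q n = {g. \<exists>f1\<in>tens n. \<exists>f2\<in>tens n.
      g = (f1 - Tcyc l q n f1) + (f2 - scal ((-1) ^ n) (cyc l q n f2))}"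

text \<open>Representatives of cycles and boundaries of Connes' complex (b : C^lambda_n \<rightarrow> C^lambda_{n-1}).\<close>
definition cycles :: "complex \<Rightarrow> complex \<Rightarrow> nat \<Rightarrow> (nat list \<Rightarrow> complex) set" where
  "cycles l q n = {f \<in> tens n. n = 0 \<or> bdry l q n f \<in> relW l q (n - 1)}"

definition bounds :: "complex \<Rightarrow> complex \<Rightarrow> nat \<Rightarrow> (nat list \<Rightarrow> complex) set" where
  "bounds l q n = {g. \<exists>h\<in>tens (Suc n). \<exists>r\<in>relW l q n. g = bdry l q (Suc n) h + r}"

text \<open>The classes of the elements of es form a basis of HC_n = cycles / bounds.\<close>
definition hc_basis :: "complex \<Rightarrow> complex \<Rightarrow> nat \<Rightarrow> (nat list \<Rightarrow> complex) list \<Rightarrow> bool" where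
  "hc_basis l q n es \<longleftrightarrow>
     set es \<subseteq> cycles l q n \<and>
     (\<forall>c. (\<Sum>i<length es. scal (c i) (es ! i)) \<in> bounds l q n \<longrightarrow> (\<forall>i<length es. c i = 0)) \<and>
     (\<forall>z\<in>cycles l q n. \<exists>c. z - (\<Sum>i<length es. scal (c i) (es ! i)) \<in> bounds l q n)"

end

theory Submission
  imports Defs
begin


lemma sum_fun_apply: "(\<Sum>a\<in>A. f a) x = (\<Sum>a\<in>A. f a x)"
  by (induction A rule: infinite_finite_induct) auto

definition fs :: "(nat list \<Rightarrow> complex) \<Rightarrow> bool" where
  "fs f \<longleftrightarrow> finite {w. f w \<noteq> 0}"

definition supp :: "(nat list \<Rightarrow> complex) \<Rightarrow> nat list set" where
  "supp f = {w. f w \<noteq> 0}"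

lemma scal_apply: "scal c f w = c * f w" by (simp add: scal_def)
lemma basis_apply: "basis w v = (if v = w then 1 else 0)" by (simp add: basis_def)

lemma scal_add: "scal c (f + g) = scal c f + scal c g" by (auto simp: scal_apply fun_eq_iff algebra_simps)
lemma scal_diff: "scal c (f - g) = scal c f - scal c g" by (auto simp: scal_apply fun_eq_iff algebra_simps)
lemma scal_scal: "scal a (scal b f) = scal (a*b) f" by (auto simp: scal_apply fun_eq_iff)
lemma scal_1[simp]: "scal 1 f = f" by (auto simp: scal_apply fun_eq_iff)
lemma scal_0[simp]: "scal 0 f = 0" by (auto simp: scal_apply fun_eq_iff)
lemma scal_zero[simp]: "scal c 0 = 0" by (auto simp: scal_apply fun_eq_iff)
lemma scal_add_left: "scal (a + b) f = scal a f + scal b f" by (auto simp: scal_apply fun_eq_iff algebra_simps)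
lemma scal_sum: "scal c (\<Sum>a\<in>A. f a) = (\<Sum>a\<in>A. scal c (f a))"
  by (rule ext) (simp add: scal_apply sum_fun_apply sum_distrib_left)
lemma scal_sum_left: "scal (\<Sum>a\<in>A. f a) g = (\<Sum>a\<in>A. scal (f a) g)"
  by (rule ext) (simp add: scal_apply sum_fun_apply sum_distrib_right)
lemma scal_minus: "scal c (- f) = - scal c f" by (auto simp: scal_apply fun_eq_iff)

lemma fs_0[simp]: "fs 0" by (simp add: fs_def)
lemma fs_basis[simp]: "fs (basis w)"
proof -
  have "{v. basis w v \<noteq> 0} \<subseteq> {w}" by (auto simp: basis_def)
  then show ?thesis unfolding fs_def using finite_subset by blast
qed
lemma fs_add[simp]: "fs f \<Longrightarrow> fs g \<Longrightarrow> fs (f + g)"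
proof -
  assume "fs f" "fs g"
  have "{w. (f+g) w \<noteq> 0} \<subseteq> {w. f w \<noteq> 0} \<union> {w. g w \<noteq> 0}" by auto
  then show ?thesis using \<open>fs f\<close> \<open>fs g\<close> unfolding fs_def using finite_subset by blast
qed
lemma fs_scal[simp]: "fs f \<Longrightarrow> fs (scal c f)"
proof -
  assume "fs f"
  have "{w. scal c f w \<noteq> 0} \<subseteq> {w. f w \<noteq> 0}" by (auto simp: scal_apply)
  then show ?thesis using \<open>fs f\<close> unfolding fs_def using finite_subset by blast
qed
lemma fs_uminus[simp]: "fs f \<Longrightarrow> fs (- f)" by (simp add: fs_def)
lemma fs_diff[simp]: "fs f \<Longrightarrow> fs g \<Longrightarrow> fs (f - g)"
  using fs_add[of f "- g"] by simp
lemma fs_sum[simp]: "(\<And>a. a \<in> A \<Longrightarrow> fs (f a)) \<Longrightarrow> fs (\<Sum>a\<in>A. f a)"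
  by (induction A rule: infinite_finite_induct) auto

lemma decomp: "fs f \<Longrightarrow> f = (\<Sum>w\<in>supp f. scal (f w) (basis w))"
proof
  fix v assume "fs f"
  have fin: "finite (supp f)" using \<open>fs f\<close> by (simp add: fs_def supp_def)
  have "(\<Sum>w\<in>supp f. scal (f w) (basis w)) v = (\<Sum>w\<in>supp f. f w * (if v = w then 1 else 0))"
    by (simp add: scal_apply sum_fun_apply basis_def)
  also have "\<dots> = (if v \<in> supp f then f v else 0)"
    using fin by (simp add: if_distrib sum.delta cong: if_cong)
  also have "\<dots> = f v" by (auto simp: supp_def)
  finally show "f v = (\<Sum>w\<in>supp f. scal (f w) (basis w)) v" by simp
qed

definition lin :: "((nat list \<Rightarrow> complex) \<Rightarrow> (nat list \<Rightarrow> complex)) \<Rightarrow> bool" where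
  "lin F \<longleftrightarrow> (\<forall>f g. fs f \<longrightarrow> fs g \<longrightarrow> F (f + g) = F f + F g)
     \<and> (\<forall>c f. fs f \<longrightarrow> F (scal c f) = scal c (F f)) \<and> (\<forall>f. fs f \<longrightarrow> fs (F f))"

lemma linD:
  assumes "lin F"
  shows "fs f \<Longrightarrow> fs g \<Longrightarrow> F (f + g) = F f + F g"
    and "fs f \<Longrightarrow> F (scal c f) = scal c (F f)"
    and "fs f \<Longrightarrow> fs (F f)"
  using assms unfolding lin_def by auto

lemma lin_zero: "lin F \<Longrightarrow> F 0 = 0"
  using linD(2)[of F 0 0] by simp

lemma lin_uminus: "lin F \<Longrightarrow> fs f \<Longrightarrow> F (- f) = - F f"
proof -
  assume a: "lin F" "fs f"
  have e: "- f = scal (-1) f" "- F f = scal (-1) (F f)" by (auto simp: scal_apply fun_eq_iff)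
  show ?thesis unfolding e using linD(2)[OF a(1) a(2)] by simp
qed

lemma lin_diff: "lin F \<Longrightarrow> fs f \<Longrightarrow> fs g \<Longrightarrow> F (f - g) = F f - F g"
  using linD(1)[of F f "- g"] lin_uminus[of F g] by simp

lemma lin_sum: "lin F \<Longrightarrow> (\<And>a. a \<in> A \<Longrightarrow> fs (f a)) \<Longrightarrow> F (\<Sum>a\<in>A. f a) = (\<Sum>a\<in>A. F (f a))"
proof (induction A rule: infinite_finite_induct)
  case (infinite A) then show ?case by (metis lin_zero sum.infinite)
next
  case empty then show ?case by (metis lin_zero sum.empty)
next
  case (insert x F')
  have "F (sum f (insert x F')) = F (f x + sum f F')" by (simp only: sum.insert[OF insert.hyps])
  also have "\<dots> = F (f x) + F (sum f F')"
    by (rule linD(1)[OF insert.prems(1)]) (use insert.prems in auto)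
  also have "\<dots> = F (f x) + (\<Sum>a\<in>F'. F (f a))" using insert.IH insert.prems by simp
  also have "\<dots> = (\<Sum>a\<in>insert x F'. F (f a))" by (simp only: sum.insert[OF insert.hyps])
  finally show ?case .
qed

lemma lin_rep: "lin F \<Longrightarrow> fs f \<Longrightarrow> F f = (\<Sum>w\<in>supp f. scal (f w) (F (basis w)))"
proof -
  assume a: "lin F" "fs f"
  have e: "f = (\<Sum>w\<in>supp f. scal (f w) (basis w))" by (rule decomp[OF a(2)])
  have "F f = F (\<Sum>w\<in>supp f. scal (f w) (basis w))" using arg_cong[where f=F, OF e] .
  also have "\<dots> = (\<Sum>w\<in>supp f. F (scal (f w) (basis w)))" by (rule lin_sum[OF a(1)]) simp
  also have "\<dots> = (\<Sum>w\<in>supp f. scal (f w) (F (basis w)))"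
    by (intro sum.cong refl linD(2)[OF a(1)]) simp
  finally show ?thesis .
qed

lemma lin_ext: "lin F \<Longrightarrow> lin G \<Longrightarrow> fs f \<Longrightarrow> (\<And>w. w \<in> supp f \<Longrightarrow> F (basis w) = G (basis w)) \<Longrightarrow> F f = G f"
proof -
  assume a: "lin F" "lin G" "fs f" "\<And>w. w \<in> supp f \<Longrightarrow> F (basis w) = G (basis w)"
  show ?thesis using lin_rep[OF a(1,3)] lin_rep[OF a(2,3)] a(4) by (auto intro: sum.cong)
qed

lemma lin_id[simp]: "lin id" and lin_id'[simp]: "lin (\<lambda>f. f)" by (auto simp: lin_def)

lemma lin_comp: "lin F \<Longrightarrow> lin G \<Longrightarrow> lin (F \<circ> G)"
  by (auto simp: lin_def)
lemma lin_comp': "lin F \<Longrightarrow> lin G \<Longrightarrow> lin (\<lambda>f. F (G f))"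
  by (auto simp: lin_def)
lemma lin_add: "lin F \<Longrightarrow> lin G \<Longrightarrow> lin (\<lambda>f. F f + G f)"
  by (auto simp: lin_def scal_add)
lemma lin_diffop: "lin F \<Longrightarrow> lin G \<Longrightarrow> lin (\<lambda>f. F f - G f)"
  by (auto simp: lin_def scal_diff)
lemma lin_scal: "lin F \<Longrightarrow> lin (\<lambda>f. scal c (F f))"
  by (auto simp: lin_def scal_add scal_scal mult.commute)
lemma lin_sumop: "(\<And>a. a \<in> A \<Longrightarrow> lin (F a)) \<Longrightarrow> lin (\<lambda>f. \<Sum>a\<in>A. F a f)"
proof (induction A rule: infinite_finite_induct)
  case (infinite A) then show ?case by (auto simp: lin_def fun_eq_iff fs_def scal_apply)
next
  case empty then show ?case by (auto simp: lin_def fun_eq_iff fs_def scal_apply)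
next
  case (insert x F')
  have "lin (\<lambda>f. F x f + (\<Sum>a\<in>F'. F a f))" using insert by (intro lin_add) auto
  moreover have "(\<lambda>f. \<Sum>a\<in>insert x F'. F a f) = (\<lambda>f. F x f + (\<Sum>a\<in>F'. F a f))"
    by (simp only: sum.insert[OF insert.hyps])
  ultimately show ?case by (simp only: )
qed
lemma lin_funpow: "lin F \<Longrightarrow> lin (F ^^ k)"
  by (induction k) (auto intro: lin_comp)

lemma lin_scal_comm: "lin F \<Longrightarrow> fs f \<Longrightarrow> F (scal c f) = scal c (F f)" by (rule linD(2))

definition matop :: "(nat list \<Rightarrow> nat list \<Rightarrow> complex) \<Rightarrow> (nat list \<Rightarrow> complex) \<Rightarrow> (nat list \<Rightarrow> complex)" where
  "matop K f = (\<lambda>v. \<Sum>w\<in>supp f. f w * K w v)"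

lemma matop_superset:
  assumes "finite A" "supp f \<subseteq> A"
  shows "matop K f v = (\<Sum>w\<in>A. f w * K w v)"
  unfolding matop_def using assms by (intro sum.mono_neutral_left) (auto simp: supp_def)

lemma lin_matop:
  assumes "\<And>w. fs (K w)"
  shows "lin (matop K)"
  unfolding lin_def
proof (intro conjI allI impI)
  fix f g assume f: "fs f" and g: "fs g"
  let ?A = "supp f \<union> supp g"
  have fin: "finite ?A" using f g by (simp add: fs_def supp_def)
  have s: "supp (f+g) \<subseteq> ?A" by (auto simp: supp_def)
  show "matop K (f + g) = matop K f + matop K g"
    apply (rule ext)
    apply (simp add: matop_superset[OF fin s] matop_superset[OF fin, of f] matop_superset[OF fin, of g] distrib_right sum.distrib)
    done
next
  fix c f assume f: "fs f"
  have fin: "finite (supp f)" using f by (simp add: fs_def supp_def)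
  have s: "supp (scal c f) \<subseteq> supp f" by (auto simp: supp_def scal_apply)
  show "matop K (scal c f) = scal c (matop K f)"
    by (rule ext) (simp add: matop_superset[OF fin s] matop_superset[OF fin, of f] sum_distrib_left mult.assoc scal_apply)
next
  fix f assume f: "fs f"
  have fin: "finite (supp f)" using f by (simp add: fs_def supp_def)
  have "{v. matop K f v \<noteq> 0} \<subseteq> (\<Union>w\<in>supp f. {v. K w v \<noteq> 0})"
  proof
    fix v assume "v \<in> {v. matop K f v \<noteq> 0}"
    then have "(\<Sum>w\<in>supp f. f w * K w v) \<noteq> 0" by (simp add: matop_def)
    have "\<exists>w\<in>supp f. f w * K w v \<noteq> 0"
    proof (rule ccontr)
      assume "\<not> (\<exists>w\<in>supp f. f w * K w v \<noteq> 0)"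
      then have "(\<Sum>w\<in>supp f. f w * K w v) = 0" by (intro sum.neutral) auto
      then show False using \<open>(\<Sum>w\<in>supp f. f w * K w v) \<noteq> 0\<close> by simp
    qed
    then obtain w where "w \<in> supp f" "f w * K w v \<noteq> 0" by blast
    then show "v \<in> (\<Union>w\<in>supp f. {v. K w v \<noteq> 0})" by auto
  qed
  moreover have "finite (\<Union>w\<in>supp f. {v. K w v \<noteq> 0})" using fin assms by (auto simp: fs_def)
  ultimately show "fs (matop K f)" unfolding fs_def using finite_subset by blast
qed

lemma matop_basis: "matop K (basis w) = K w"
proof
  fix v
  have "supp (basis w) = {w}" by (auto simp: supp_def basis_def)
  then show "matop K (basis w) v = K w v" by (simp add: matop_def basis_def)
qed

lemma mono_ext_matop: "fs f \<Longrightarrow> mono_ext c \<pi> f = matop (\<lambda>w. scal (c w) (basis (\<pi> w))) f"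
proof
  fix v assume f: "fs f"
  have fin: "finite (supp f)" using f by (simp add: fs_def supp_def)
  have "mono_ext c \<pi> f v = (\<Sum>w\<in>{w\<in>supp f. \<pi> w = v}. c w * f w)"
    by (simp add: mono_ext_def supp_def)
  also have "\<dots> = (\<Sum>w\<in>supp f. if \<pi> w = v then c w * f w else 0)"
    using fin by (simp add: sum.inter_filter)
  also have "\<dots> = matop (\<lambda>w. scal (c w) (basis (\<pi> w))) f v"
    by (auto simp: matop_def basis_def scal_def intro!: sum.cong)
  finally show "mono_ext c \<pi> f v = matop (\<lambda>w. scal (c w) (basis (\<pi> w))) f v" .
qed

lemma lin_mono_ext: "lin (mono_ext c \<pi>)"
proof -
  have L: "lin (matop (\<lambda>w. scal (c w) (basis (\<pi> w))))" by (rule lin_matop) simp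
  show ?thesis using L unfolding lin_def by (simp add: mono_ext_matop)
qed

lemma mono_ext_basis: "mono_ext c \<pi> (basis w) = scal (c w) (basis (\<pi> w))"
  by (simp add: mono_ext_matop matop_basis scal_def)


definition mrg :: "nat \<Rightarrow> nat list \<Rightarrow> nat list" where
  "mrg j w = take j w @ [w ! j + w ! Suc j] @ drop (Suc (Suc j)) w"

definition rotr :: "nat list \<Rightarrow> nat list" where
  "rotr w = last w # butlast w"

definition cc :: "complex \<Rightarrow> complex \<Rightarrow> nat list \<Rightarrow> complex" where
  "cc l q w = (l * q ^ (sum_list w - 1)) ^ last w"

definition kap :: "complex \<Rightarrow> complex \<Rightarrow> nat \<Rightarrow> complex" where
  "kap l q S = (l * q ^ (S - 1)) ^ S"

lemma lin_psi[simp]: "lin (psi q i)" unfolding psi_def by (rule lin_mono_ext)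
lemma lin_sigma0[simp]: "lin (sigma0 l q)" unfolding sigma0_def by (rule lin_mono_ext)
lemma lin_mu[simp]: "lin (mu j)" unfolding mu_def by (rule lin_mono_ext)
lemma lin_Psi_block[simp]: "lin (Psi_block q k)"
  by (induction k) (auto intro: lin_comp lin_comp')
lemma lin_cyc[simp]: "lin (cyc l q n)" unfolding cyc_def by (auto intro: lin_comp)
lemma lin_Tcyc[simp]: "lin (Tcyc l q n)" unfolding Tcyc_def by (intro lin_funpow lin_cyc)
lemma lin_face[simp]: "lin (face l q n j)" unfolding face_def by (auto intro: lin_comp)
lemma lin_bdry[simp]: "lin (bdry l q n)"
  unfolding bdry_def by (intro lin_sumop lin_scal) simp

lemma mu_basis: "mu j (basis w) = basis (mrg j w)"
  unfolding mu_def mrg_def by (simp add: mono_ext_basis)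

lemma psi_basis: "psi q i (basis w) = scal (q ^ (w ! i * w ! Suc i)) (basis (w[i := w ! Suc i, Suc i := w ! i]))"
  unfolding psi_def by (simp add: mono_ext_basis)

lemma sigma0_basis: "sigma0 l q (basis w) = scal (sigma_coef l q (hd w)) (basis w)"
  unfolding sigma0_def by (simp add: mono_ext_basis)

lemma Psi_block_basis:
  "k < length w \<Longrightarrow> Psi_block q k (basis w) =
     scal (q ^ (w ! k * sum_list (take k w))) (basis (w ! k # take k w @ drop (Suc k) w))"
proof (induction k arbitrary: w)
  case 0
  then show ?case by (cases w) (auto simp: scal_def)
next
  case (Suc k)
  define w' where "w' = w[k := w ! Suc k, Suc k := w ! k]"
  have len: "length w' = length w" by (simp add: w'_def)
  have "Psi_block q (Suc k) (basis w) = Psi_block q k (psi q k (basis w))" by simp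
  also have "\<dots> = Psi_block q k (scal (q ^ (w ! k * w ! Suc k)) (basis w'))"
    by (simp add: psi_basis w'_def)
  also have "\<dots> = scal (q ^ (w ! k * w ! Suc k)) (Psi_block q k (basis w'))"
    by (rule linD(2)[OF lin_Psi_block]) simp
  also have "\<dots> = scal (q ^ (w ! k * w ! Suc k)) (scal (q ^ (w' ! k * sum_list (take k w')))
       (basis (w' ! k # take k w' @ drop (Suc k) w')))"
    using Suc by (simp add: len)
  also have "\<dots> = scal (q ^ (w ! Suc k * sum_list (take (Suc k) w)))
       (basis (w ! Suc k # take (Suc k) w @ drop (Suc (Suc k)) w))"
  proof -
    have a: "w' ! k = w ! Suc k" using Suc.prems by (simp add: w'_def nth_list_update)
    have b: "take k w' = take k w" by (simp add: w'_def)
    have c: "drop (Suc k) w' = w ! k # drop (Suc (Suc k)) w"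
    proof -
      have "drop (Suc k) w' = (drop (Suc k) (w[k := w ! Suc k]))[0 := w ! k]"
        unfolding w'_def by (simp add: drop_update_swap)
      also have "drop (Suc k) (w[k := w ! Suc k]) = drop (Suc k) w" by simp
      also have "drop (Suc k) w = w ! Suc k # drop (Suc (Suc k)) w"
        by (rule Cons_nth_drop_Suc[symmetric]) (use Suc.prems in simp)
      finally show ?thesis by simp
    qed
    have d: "take (Suc k) w = take k w @ [w ! k]" using Suc.prems by (simp add: take_Suc_conv_app_nth)
    have e: "q ^ (w ! k * w ! Suc k) * q ^ (w' ! k * sum_list (take k w')) =
        q ^ (w ! Suc k * sum_list (take (Suc k) w))"
    proof -
      have "q ^ (w ! k * w ! Suc k) * q ^ (w' ! k * sum_list (take k w')) =
          q ^ (w ! k * w ! Suc k + w ! Suc k * sum_list (take k w))"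
        unfolding a b by (rule power_add[symmetric])
      also have "w ! k * w ! Suc k + w ! Suc k * sum_list (take k w) = w ! Suc k * sum_list (take (Suc k) w)"
        unfolding d by (simp add: algebra_simps)
      finally show ?thesis .
    qed
    show ?thesis unfolding scal_scal e by (simp add: a b c d)
  qed
  finally show ?case .
qed

lemma cc_alt: "sigma_coef l q a * q ^ (a * B) = (l * q ^ (B + a - 1)) ^ a"
proof (cases a)
  case 0 then show ?thesis by (simp add: sigma_coef_def)
next
  case (Suc a')
  have "sigma_coef l q a * q ^ (a * B) = l ^ a * q ^ (a * a' + a * B)"
    by (simp add: sigma_coef_def Suc power_add)
  also have "a * a' + a * B = (B + a - 1) * a" by (simp add: Suc algebra_simps)
  also have "l ^ a * q ^ ((B + a - 1) * a) = (l * q ^ (B + a - 1)) ^ a"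
    by (simp only: power_mult_distrib power_mult)
  finally show ?thesis .
qed

lemma sum_list_butlast_last: "w \<noteq> [] \<Longrightarrow> sum_list w = sum_list (butlast w) + last w"
proof -
  assume ne: "w \<noteq> []"
  have "sum_list w = sum_list (butlast w @ [last w])" using append_butlast_last_id[OF ne] by simp
  then show ?thesis by simp
qed

lemma cyc_basis:
  assumes "length w = Suc n"
  shows "cyc l q n (basis w) = scal (cc l q w) (basis (rotr w))"
proof -
  have ne: "w \<noteq> []" using assms by auto
  have "Psi_block q n (basis w) = scal (q ^ (w ! n * sum_list (take n w))) (basis (w ! n # take n w @ drop (Suc n) w))"
    using assms by (simp add: Psi_block_basis)
  also have "w ! n = last w" using assms ne by (simp add: last_conv_nth)
  also have "take n w = butlast w" using assms by (simp add: butlast_conv_take)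
  also have "drop (Suc n) w = []" using assms by simp
  finally have P: "Psi_block q n (basis w) = scal (q ^ (last w * sum_list (butlast w))) (basis (rotr w))"
    by (simp add: rotr_def)
  have "cyc l q n (basis w) = sigma0 l q (scal (q ^ (last w * sum_list (butlast w))) (basis (rotr w)))"
    by (simp add: cyc_def P)
  also have "\<dots> = scal (q ^ (last w * sum_list (butlast w)) * sigma_coef l q (last w)) (basis (rotr w))"
    by (simp add: linD(2)[OF lin_sigma0] sigma0_basis scal_scal rotr_def)
  also have "q ^ (last w * sum_list (butlast w)) * sigma_coef l q (last w) = cc l q w"
    using cc_alt[of l q "last w" "sum_list (butlast w)"] sum_list_butlast_last[OF ne]
    by (simp add: cc_def mult.commute add.commute)
  finally show ?thesis .
qed

lemma length_rotr[simp]: "w \<noteq> [] \<Longrightarrow> length (rotr w) = length w"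
  by (cases w rule: rev_cases) (auto simp: rotr_def)

lemma sum_list_rotr[simp]: "w \<noteq> [] \<Longrightarrow> sum_list (rotr w) = sum_list w"
  by (cases w rule: rev_cases) (auto simp: rotr_def)

lemma length_rotr_pow[simp]: "w \<noteq> [] \<Longrightarrow> length ((rotr ^^ i) w) = length w"
  by (induction i) (auto, metis length_0_conv length_rotr)

lemma sum_list_rotr_pow[simp]: "w \<noteq> [] \<Longrightarrow> sum_list ((rotr ^^ i) w) = sum_list w"
proof (induction i)
  case (Suc i)
  have "(rotr ^^ i) w \<noteq> []" using Suc.prems length_rotr_pow[of w i] by (metis length_0_conv)
  then show ?case using Suc by simp
qed simp

lemma rotr_pow: "i \<le> length w \<Longrightarrow> (rotr ^^ i) w = drop (length w - i) w @ take (length w - i) w"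
proof (induction i)
  case 0 then show ?case by simp
next
  case (Suc i)
  define d where "d = length w - Suc i"
  have d1: "d < length w" "length w - i = Suc d" using Suc.prems by (auto simp: d_def)
  have tk: "take (Suc d) w = take d w @ [w ! d]"
    by (rule take_Suc_conv_app_nth) (rule d1(1))
  have dr: "drop d w = w ! d # drop (Suc d) w"
    by (rule Cons_nth_drop_Suc[symmetric]) (rule d1(1))
  have "(rotr ^^ Suc i) w = rotr (drop (Suc d) w @ take (Suc d) w)" using Suc by (simp add: d1(2))
  also have "\<dots> = drop d w @ take d w"
    unfolding rotr_def tk dr by (simp add: butlast_append)
  finally show ?case by (simp add: d_def)
qed

lemma last_rotr_pow: "i < length w \<Longrightarrow> last ((rotr ^^ i) w) = w ! (length w - Suc i)"
proof -
  assume i: "i < length w"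
  define d where "d = length w - Suc i"
  have d1: "d < length w" "length w - i = Suc d" using i by (auto simp: d_def)
  have tk: "take (Suc d) w = take d w @ [w ! d]"
    by (rule take_Suc_conv_app_nth) (rule d1(1))
  have "(rotr ^^ i) w = drop (Suc d) w @ take (Suc d) w" using i by (simp add: rotr_pow d1(2))
  then have "last ((rotr ^^ i) w) = w ! d" by (simp add: tk)
  then show ?thesis by (simp add: d_def)
qed

lemma hd_rotr_pow: "i < length w \<Longrightarrow> hd ((rotr ^^ i) w) = w ! ((length w - i) mod length w)"
proof (cases "i = 0")
  case True
  assume "i < length w"
  then show ?thesis using True by (cases w) auto
next
  case False
  assume i: "i < length w"
  then have "drop (length w - i) w \<noteq> []" using False by simp
  then have "hd ((rotr ^^ i) w) = hd (drop (length w - i) w)" using i by (simp add: rotr_pow)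
  also have "\<dots> = w ! (length w - i)" using i False by (simp add: hd_drop_conv_nth)
  finally show ?thesis using i False by simp
qed

lemma rotr_pow_len: "(rotr ^^ length w) w = w"
  by (simp add: rotr_pow)

lemma cyc_pow_basis:
  assumes "length w = Suc n"
  shows "(cyc l q n ^^ k) (basis w) = scal (\<Prod>i<k. cc l q ((rotr ^^ i) w)) (basis ((rotr ^^ k) w))"
proof (induction k)
  case 0 then show ?case by simp
next
  case (Suc k)
  have len: "length ((rotr ^^ k) w) = Suc n"
    using assms length_rotr_pow[of w k] by (metis list.size(3) nat.simps(3))
  have "(cyc l q n ^^ Suc k) (basis w) = cyc l q n (scal (\<Prod>i<k. cc l q ((rotr ^^ i) w)) (basis ((rotr ^^ k) w)))"
    using Suc by simp
  also have "\<dots> = scal (\<Prod>i<k. cc l q ((rotr ^^ i) w)) (scal (cc l q ((rotr ^^ k) w)) (basis ((rotr ^^ Suc k) w)))"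
    using len by (simp add: linD(2)[OF lin_cyc] cyc_basis)
  finally show ?case by (simp add: scal_scal)
qed

lemma Tcyc_basis:
  assumes "length w = Suc n"
  shows "Tcyc l q n (basis w) = scal (kap l q (sum_list w)) (basis w)"
proof -
  have ne0: "w \<noteq> []" using assms by auto
  have ne: "\<And>i. (rotr ^^ i) w \<noteq> []" using assms ne0 by (metis length_rotr_pow list.size(3) nat.simps(3))
  have "(\<Prod>i<Suc n. cc l q ((rotr ^^ i) w)) = (\<Prod>i<Suc n. (l * q ^ (sum_list w - 1)) ^ last ((rotr ^^ i) w))"
    using ne0 by (simp add: cc_def)
  also have "\<dots> = (l * q ^ (sum_list w - 1)) ^ (\<Sum>i<Suc n. last ((rotr ^^ i) w))"
    by (rule power_sum[symmetric])
  also have "(\<Sum>i<Suc n. last ((rotr ^^ i) w)) = (\<Sum>i<Suc n. w ! (Suc n - Suc i))"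
    using assms by (intro sum.cong refl) (simp add: last_rotr_pow)
  also have "\<dots> = (\<Sum>i<Suc n. w ! i)" by (rule sum.nat_diff_reindex)
  also have "\<dots> = sum_list w" using assms by (simp add: sum_list_sum_nth atLeast0LessThan)
  finally have P: "(\<Prod>i<Suc n. cc l q ((rotr ^^ i) w)) = kap l q (sum_list w)" by (simp add: kap_def)
  have "Tcyc l q n (basis w) = scal (\<Prod>i<Suc n. cc l q ((rotr ^^ i) w)) (basis ((rotr ^^ Suc n) w))"
    unfolding Tcyc_def by (rule cyc_pow_basis[OF assms])
  also have "(rotr ^^ Suc n) w = w" using rotr_pow_len[of w] assms by simp
  finally show ?thesis using P by simp
qed


lemma tens_iff: "f \<in> tens n \<longleftrightarrow> fs f \<and> (\<forall>w. f w \<noteq> 0 \<longrightarrow> length w = Suc n)"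
  by (simp add: tens_def fs_def)

lemma tens_fs: "f \<in> tens n \<Longrightarrow> fs f" by (simp add: tens_iff)
lemma tens_len: "f \<in> tens n \<Longrightarrow> w \<in> supp f \<Longrightarrow> length w = Suc n"
  by (simp add: tens_iff supp_def)

lemma tens_0[simp]: "0 \<in> tens n" by (simp add: tens_iff)
lemma tens_add[simp]: "f \<in> tens n \<Longrightarrow> g \<in> tens n \<Longrightarrow> f + g \<in> tens n"
proof -
  assume a: "f \<in> tens n" "g \<in> tens n"
  have "\<And>w. (f + g) w \<noteq> 0 \<Longrightarrow> length w = Suc n"
  proof -
    fix w assume "(f + g) w \<noteq> 0"
    then have "f w \<noteq> 0 \<or> g w \<noteq> 0" by auto
    then show "length w = Suc n" using a by (auto simp: tens_iff)
  qed
  then show ?thesis using a by (simp add: tens_iff)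
qed
lemma tens_scal[simp]: "f \<in> tens n \<Longrightarrow> scal c f \<in> tens n"
  by (auto simp: tens_iff scal_apply)
lemma tens_uminus[simp]: "f \<in> tens n \<Longrightarrow> - f \<in> tens n"
  by (auto simp: tens_iff)
lemma tens_diff[simp]: "f \<in> tens n \<Longrightarrow> g \<in> tens n \<Longrightarrow> f - g \<in> tens n"
  using tens_add[of f n "- g"] by simp
lemma tens_sum[simp]: "(\<And>a. a \<in> A \<Longrightarrow> f a \<in> tens n) \<Longrightarrow> (\<Sum>a\<in>A. f a) \<in> tens n"
  by (induction A rule: infinite_finite_induct) auto
lemma tens_basis[simp]: "length w = Suc n \<Longrightarrow> basis w \<in> tens n"
  by (auto simp: tens_iff basis_apply)

lemma tens_map:
  assumes "lin F" "\<And>w. length w = Suc n \<Longrightarrow> F (basis w) \<in> tens m" "f \<in> tens n"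
  shows "F f \<in> tens m"
proof -
  have "F f = (\<Sum>w\<in>supp f. scal (f w) (F (basis w)))" by (rule lin_rep[OF assms(1) tens_fs[OF assms(3)]])
  also have "\<dots> \<in> tens m" using assms(2) tens_len[OF assms(3)] by (intro tens_sum tens_scal) auto
  finally show ?thesis .
qed

lemma mrg_Cons[simp]: "mrg (Suc j) (a # xs) = a # mrg j xs"
  by (simp add: mrg_def)

lemma mrg_append: "Suc j < length xs \<Longrightarrow> mrg j (xs @ ys) = mrg j xs @ ys"
  by (simp add: mrg_def nth_append)

lemma mrg_decomp: "Suc j < length w \<Longrightarrow> w = take j w @ w ! j # w ! Suc j # drop (Suc (Suc j)) w"
proof -
  assume a: "Suc j < length w"
  have d1: "drop j w = w ! j # drop (Suc j) w" by (rule Cons_nth_drop_Suc[symmetric]) (use a in simp)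
  have d2: "drop (Suc j) w = w ! Suc j # drop (Suc (Suc j)) w" by (rule Cons_nth_drop_Suc[symmetric]) (use a in simp)
  have "w = take j w @ drop j w" by simp
  also have "\<dots> = take j w @ w ! j # w ! Suc j # drop (Suc (Suc j)) w" by (simp only: d1 d2)
  finally show ?thesis .
qed

lemma length_mrg: "Suc j < length w \<Longrightarrow> length (mrg j w) = length w - 1"
  by (simp add: mrg_def)

lemma sum_list_mrg: "Suc j < length w \<Longrightarrow> sum_list (mrg j w) = sum_list w"
proof -
  assume a: "Suc j < length w"
  have "sum_list w = sum_list (take j w @ w ! j # w ! Suc j # drop (Suc (Suc j)) w)"
    using mrg_decomp[OF a] by simp
  then show ?thesis by (simp add: mrg_def)
qed

lemma mrg_0_Cons2[simp]: "mrg 0 (a # b # xs) = (a + b) # xs"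
  by (simp add: mrg_def)

lemma rotr_snoc[simp]: "rotr (xs @ [a]) = a # xs"
  by (simp add: rotr_def)

lemma cc_snoc: "cc l q (xs @ [a]) = (l * q ^ (sum_list xs + a - 1)) ^ a"
  by (simp add: cc_def)

lemma cyc_tens[simp]: "f \<in> tens n \<Longrightarrow> cyc l q n f \<in> tens n"
proof (rule tens_map[OF lin_cyc])
  fix w :: "nat list" assume a: "length w = Suc n"
  then have "w \<noteq> []" by auto
  then have "length (rotr w) = Suc n" using a by simp
  then show "cyc l q n (basis w) \<in> tens n" using a by (simp add: cyc_basis)
qed

lemma cycpow_tens[simp]: "f \<in> tens n \<Longrightarrow> (cyc l q n ^^ k) f \<in> tens n"
  by (induction k) auto

lemma Tcyc_tens[simp]: "f \<in> tens n \<Longrightarrow> Tcyc l q n f \<in> tens n"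
  by (simp add: Tcyc_def del: funpow.simps)

lemma mu_tens[simp]: "j < Suc m \<Longrightarrow> f \<in> tens (Suc m) \<Longrightarrow> mu j f \<in> tens m"
  by (rule tens_map[OF lin_mu]) (auto simp: mu_basis length_mrg)

lemma face_tens[simp]: "f \<in> tens (Suc m) \<Longrightarrow> face l q (Suc m) j f \<in> tens m"
  by (auto simp: face_def)

definition tau :: "complex \<Rightarrow> complex \<Rightarrow> nat \<Rightarrow> (nat list \<Rightarrow> complex) \<Rightarrow> (nat list \<Rightarrow> complex)" where
  "tau l q n f = scal ((-1) ^ n) (cyc l q n f)"

definition Nm :: "complex \<Rightarrow> complex \<Rightarrow> nat \<Rightarrow> (nat list \<Rightarrow> complex) \<Rightarrow> (nat list \<Rightarrow> complex)" where
  "Nm l q n f = (\<Sum>k\<le>n. (tau l q n ^^ k) f)"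

definition Dp :: "complex \<Rightarrow> complex \<Rightarrow> nat \<Rightarrow> nat \<Rightarrow> (nat list \<Rightarrow> complex) \<Rightarrow> (nat list \<Rightarrow> complex)" where
  "Dp l q n i f = scal ((-1) ^ i) (face l q n i f)"

definition bp :: "complex \<Rightarrow> complex \<Rightarrow> nat \<Rightarrow> (nat list \<Rightarrow> complex) \<Rightarrow> (nat list \<Rightarrow> complex)" where
  "bp l q n f = (\<Sum>i<n. Dp l q n i f)"

lemma bdry_Dp: "bdry l q n f = (\<Sum>j\<le>n. Dp l q n j f)"
  by (simp add: bdry_def Dp_def)

lemma lin_tau[simp]: "lin (tau l q n)" unfolding tau_def by (intro lin_scal lin_cyc)
lemma lin_taupow[simp]: "lin (tau l q n ^^ k)" by (intro lin_funpow lin_tau)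
lemma lin_Nm[simp]: "lin (Nm l q n)" unfolding Nm_def by (intro lin_sumop) simp
lemma lin_Dp[simp]: "lin (Dp l q n i)" unfolding Dp_def by (intro lin_scal lin_face)
lemma lin_bp[simp]: "lin (bp l q n)" unfolding bp_def by (intro lin_sumop) simp

lemma tau_tens[simp]: "f \<in> tens n \<Longrightarrow> tau l q n f \<in> tens n" by (simp add: tau_def)
lemma taupow_tens[simp]: "f \<in> tens n \<Longrightarrow> (tau l q n ^^ k) f \<in> tens n" by (induction k) auto
lemma Nm_tens[simp]: "f \<in> tens n \<Longrightarrow> Nm l q n f \<in> tens n" by (simp add: Nm_def)
lemma Dp_tens[simp]: "f \<in> tens (Suc m) \<Longrightarrow> Dp l q (Suc m) j f \<in> tens m"
  by (simp add: Dp_def)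
lemma bdry_tens[simp]: "f \<in> tens (Suc m) \<Longrightarrow> bdry l q (Suc m) f \<in> tens m"
  by (simp add: bdry_Dp)
lemma bp_tens[simp]: "f \<in> tens (Suc m) \<Longrightarrow> bp l q (Suc m) f \<in> tens m"
  by (simp add: bp_def)


lemma cyc_scal: "fs f \<Longrightarrow> cyc l q n (scal c f) = scal c (cyc l q n f)" by (rule linD(2)[OF lin_cyc])
lemma mu_scal: "fs f \<Longrightarrow> mu j (scal c f) = scal c (mu j f)" by (rule linD(2)[OF lin_mu])
lemma face_scal: "fs f \<Longrightarrow> face l q n j (scal c f) = scal c (face l q n j f)" by (rule linD(2)[OF lin_face])

lemma R1_basis_lt:
  assumes len: "length w = Suc (Suc m)" and i: "1 \<le> i" "i \<le> m"
  shows "mu i (cyc l q (Suc m) (basis w)) = cyc l q m (mu (i - 1) (basis w))"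
proof -
  obtain xs a where w: "w = xs @ [a]" using len by (cases w rule: rev_cases) auto
  have lxs: "length xs = Suc m" using len w by simp
  obtain i' where i': "i = Suc i'" using i by (cases i) auto
  have lm: "length (mrg i' xs) = m" using lxs i i' by (simp add: length_mrg)
  have sm: "sum_list (mrg i' xs) = sum_list xs" using lxs i i' by (simp add: sum_list_mrg)
  have "mu i (cyc l q (Suc m) (basis w)) = scal (cc l q w) (basis (a # mrg i' xs))"
    using len by (simp add: cyc_basis mu_scal mu_basis w i')
  moreover have "cyc l q m (mu (i - 1) (basis w)) = scal (cc l q (mrg i' xs @ [a])) (basis (a # mrg i' xs))"
    using lxs i i' lm by (simp add: mu_basis w mrg_append cyc_basis)
  moreover have "cc l q (mrg i' xs @ [a]) = cc l q w" using sm by (simp add: w cc_snoc)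
  ultimately show ?thesis by simp
qed

lemma R1_basis_eq:
  assumes len: "length w = Suc (Suc m)"
  shows "mu 0 (cyc l q (Suc m) (cyc l q (Suc m) (basis w))) = cyc l q m (mu m (basis w))"
proof -
  obtain xs a where w0: "w = xs @ [a]" using len by (cases w rule: rev_cases) auto
  obtain ys b where xs: "xs = ys @ [b]" using len w0 by (cases xs rule: rev_cases) auto
  have w: "w = ys @ [b, a]" using w0 xs by simp
  have lys: "length ys = m" using len w by simp
  define z where "z = l * q ^ (sum_list ys + b + a - 1)"
  have c1: "cc l q w = z ^ a" by (simp add: w cc_def z_def add.assoc)
  have r1: "rotr w = a # ys @ [b]" by (simp add: w rotr_def butlast_append)
  have r2: "rotr (a # ys @ [b]) = b # a # ys" by (simp add: rotr_def butlast_append)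
  have c2: "cc l q (a # ys @ [b]) = z ^ b" by (simp add: cc_def z_def algebra_simps)
  have c3: "cc l q (ys @ [b + a]) = z ^ (b + a)" by (simp add: cc_def z_def algebra_simps)
  have lr: "length (a # ys @ [b]) = Suc (Suc m)" using lys by simp
  have s1: "cyc l q (Suc m) (basis w) = scal (z ^ a) (basis (a # ys @ [b]))"
    using cyc_basis[OF len] c1 r1 by simp
  have s2: "cyc l q (Suc m) (basis (a # ys @ [b])) = scal (z ^ b) (basis (b # a # ys))"
    using cyc_basis[OF lr] c2 r2 by simp
  have "mu 0 (cyc l q (Suc m) (cyc l q (Suc m) (basis w))) = mu 0 (cyc l q (Suc m) (scal (z ^ a) (basis (a # ys @ [b]))))"
    by (simp only: s1)
  also have "\<dots> = mu 0 (scal (z ^ a) (scal (z ^ b) (basis (b # a # ys))))"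
    by (simp only: cyc_scal[OF fs_basis] s2)
  also have "\<dots> = scal (z ^ a) (scal (z ^ b) (basis ((b + a) # ys)))"
    by (simp only: mu_scal[OF fs_scal[OF fs_basis]] mu_scal[OF fs_basis] mu_basis mrg_0_Cons2)
  also have "\<dots> = scal (z ^ (b + a)) (basis ((b + a) # ys))"
    by (simp only: scal_scal power_add mult.commute)
  finally have L: "mu 0 (cyc l q (Suc m) (cyc l q (Suc m) (basis w))) = scal (z ^ (b + a)) (basis ((b + a) # ys))" .
  have m1: "mrg m w = ys @ [b + a]" using lys by (simp add: w mrg_def nth_append)
  have m2: "length (ys @ [b + a]) = Suc m" using lys by simp
  have R: "cyc l q m (mu m (basis w)) = scal (z ^ (b + a)) (basis ((b + a) # ys))"
    using cyc_basis[OF m2] c3 by (simp add: mu_basis m1)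
  show ?thesis using L R by simp
qed

lemma R1:
  assumes f: "f \<in> tens (Suc m)" and i: "1 \<le> i" "i \<le> Suc m"
  shows "face l q (Suc m) i (cyc l q (Suc m) f) = cyc l q m (face l q (Suc m) (i - 1) f)"
proof (rule lin_ext[where F="\<lambda>f. face l q (Suc m) i (cyc l q (Suc m) f)" and G="\<lambda>f. cyc l q m (face l q (Suc m) (i - 1) f)"])
  show "lin (\<lambda>f. face l q (Suc m) i (cyc l q (Suc m) f))" by (rule lin_comp') simp_all
  show "lin (\<lambda>f. cyc l q m (face l q (Suc m) (i - 1) f))" by (rule lin_comp') simp_all
  show "fs f" by (rule tens_fs[OF f])
  fix w assume "w \<in> supp f"
  then have len: "length w = Suc (Suc m)" using tens_len[OF f] by simp
  show "face l q (Suc m) i (cyc l q (Suc m) (basis w)) = cyc l q m (face l q (Suc m) (i - 1) (basis w))"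
  proof (cases "i \<le> m")
    case True
    have h: "i < Suc m" "i - 1 < Suc m" using True by auto
    have "face l q (Suc m) i (cyc l q (Suc m) (basis w)) = mu i (cyc l q (Suc m) (basis w))"
      using h by (simp add: face_def)
    also have "\<dots> = cyc l q m (mu (i - 1) (basis w))" by (rule R1_basis_lt[OF len i(1) True])
    also have "\<dots> = cyc l q m (face l q (Suc m) (i - 1) (basis w))" using h by (simp add: face_def)
    finally show ?thesis .
  next
    case False
    then have "i = Suc m" using i by simp
    then show ?thesis using R1_basis_eq[OF len] by (simp add: face_def)
  qed
qed

lemma Dp_tau:
  assumes f: "f \<in> tens (Suc m)" and i: "1 \<le> i" "i \<le> Suc m"
  shows "Dp l q (Suc m) i (tau l q (Suc m) f) = tau l q m (Dp l q (Suc m) (i - 1) f)"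
proof -
  obtain i' where i': "i = Suc i'" using i by (cases i) auto
  have ff: "fs f" "fs (cyc l q (Suc m) f)" "fs (face l q (Suc m) i' f)"
    using tens_fs[OF f] tens_fs[OF cyc_tens[OF f]] tens_fs[OF face_tens[OF f]] by auto
  have "Dp l q (Suc m) i (tau l q (Suc m) f) = scal ((-1) ^ i * (-1) ^ Suc m) (face l q (Suc m) i (cyc l q (Suc m) f))"
    using ff by (simp add: Dp_def tau_def face_scal scal_scal)
  also have "\<dots> = scal ((-1) ^ m * (-1) ^ i') (cyc l q m (face l q (Suc m) i' f))"
    using R1[OF f i] by (simp add: i' mult.commute)
  also have "\<dots> = tau l q m (Dp l q (Suc m) (i - 1) f)"
    using ff by (simp add: Dp_def tau_def cyc_scal scal_scal i')
  finally show ?thesis .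
qed

lemma Dp0_tau:
  assumes f: "f \<in> tens (Suc m)"
  shows "Dp l q (Suc m) 0 (tau l q (Suc m) f) = Dp l q (Suc m) (Suc m) f"
proof -
  have ff: "fs (cyc l q (Suc m) f)" using tens_fs[OF cyc_tens[OF f]] .
  show ?thesis using ff by (simp add: Dp_def tau_def face_def mu_scal)
qed


lemma funpow_Suc_apply: "(F ^^ Suc k) x = (F ^^ k) (F x)"
  by (simp add: funpow_swap1)

lemma Dp_taupow:
  assumes f: "f \<in> tens (Suc m)" and k: "k \<le> Suc m" and i: "i \<le> Suc m"
  shows "Dp l q (Suc m) i ((tau l q (Suc m) ^^ k) f) =
    (if k \<le> i then (tau l q m ^^ k) (Dp l q (Suc m) (i - k) f)
     else (tau l q m ^^ (k - 1)) (Dp l q (Suc m) (Suc m + Suc i - k) f))"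
  using f k
proof (induction k arbitrary: f)
  case 0 then show ?case by simp
next
  case (Suc k)
  have tf: "tau l q (Suc m) f \<in> tens (Suc m)" using Suc.prems by simp
  have IH: "Dp l q (Suc m) i ((tau l q (Suc m) ^^ k) (tau l q (Suc m) f)) =
    (if k \<le> i then (tau l q m ^^ k) (Dp l q (Suc m) (i - k) (tau l q (Suc m) f))
     else (tau l q m ^^ (k - 1)) (Dp l q (Suc m) (Suc m + Suc i - k) (tau l q (Suc m) f)))"
    using Suc.IH[OF tf] Suc.prems by simp
  have lhs: "Dp l q (Suc m) i ((tau l q (Suc m) ^^ Suc k) f) = Dp l q (Suc m) i ((tau l q (Suc m) ^^ k) (tau l q (Suc m) f))"
    by (simp only: funpow_Suc_apply)
  show ?case
  proof (cases "k < i")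
    case True
    have "Dp l q (Suc m) (i - k) (tau l q (Suc m) f) = tau l q m (Dp l q (Suc m) (i - k - 1) f)"
      using Dp_tau[OF Suc.prems(1), of "i - k"] True i by simp
    then show ?thesis using lhs IH True by (simp add: funpow_swap1)
  next
    case False
    show ?thesis
    proof (cases "k = i")
      case True
      have "Dp l q (Suc m) 0 (tau l q (Suc m) f) = Dp l q (Suc m) (Suc m) f"
        by (rule Dp0_tau[OF Suc.prems(1)])
      then show ?thesis using lhs IH True by simp
    next
      case False2: False
      then have ki: "i < k" using False by simp
      have j1: "1 \<le> Suc m + Suc i - k" "Suc m + Suc i - k \<le> Suc m" using ki Suc.prems(2) by auto
      have "Dp l q (Suc m) (Suc m + Suc i - k) (tau l q (Suc m) f) = tau l q m (Dp l q (Suc m) (Suc m + Suc i - k - 1) f)"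
        using Dp_tau[OF Suc.prems(1) j1] by simp
      moreover have "(tau l q m ^^ (k - 1)) (tau l q m x) = (tau l q m ^^ k) x" for x
      proof -
        obtain k' where "k = Suc k'" using ki by (cases k) auto
        then show ?thesis by (simp add: funpow_swap1)
      qed
      moreover have "Suc m + Suc i - k - 1 = Suc m + Suc i - Suc k" by simp
      ultimately show ?thesis using lhs IH ki by simp
    qed
  qed
qed

lemma bp_Nm:
  assumes f: "f \<in> tens (Suc m)"
  shows "bp l q (Suc m) (Nm l q (Suc m) f) = Nm l q m (bdry l q (Suc m) f)"
proof -
  let ?T = "tau l q (Suc m)" and ?T' = "tau l q m"
  define G where "G = (\<lambda>i k. if k \<le> i then (?T' ^^ k) (Dp l q (Suc m) (i - k) f)
     else (?T' ^^ (k - 1)) (Dp l q (Suc m) (Suc m + Suc i - k) f))"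
  have fs1: "\<And>k. fs ((?T ^^ k) f)" using tens_fs[OF taupow_tens[OF f]] by simp
  have "bp l q (Suc m) (Nm l q (Suc m) f) = (\<Sum>i<Suc m. Dp l q (Suc m) i (\<Sum>k\<le>Suc m. (?T ^^ k) f))"
    by (simp add: bp_def Nm_def)
  also have "\<dots> = (\<Sum>i<Suc m. \<Sum>k\<le>Suc m. Dp l q (Suc m) i ((?T ^^ k) f))"
    by (intro sum.cong refl lin_sum[OF lin_Dp] fs1)
  also have "\<dots> = (\<Sum>i<Suc m. \<Sum>k\<le>Suc m. G i k)"
    unfolding G_def by (intro sum.cong refl Dp_taupow[OF f]) auto
  also have "\<dots> = (\<Sum>(i, k)\<in>{..<Suc m} \<times> {..Suc m}. G i k)"
    by (rule sum.cartesian_product)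
  also have "\<dots> = (\<Sum>(p, j)\<in>{..m} \<times> {..Suc m}. (?T' ^^ p) (Dp l q (Suc m) j f))"
  proof (rule sum.reindex_bij_witness[where j="\<lambda>(i, k). if k \<le> i then (k, i - k) else (k - 1, Suc m + Suc i - k)"
        and i="\<lambda>(p, j). if j \<le> m - p then (j + p, p) else (j + p - Suc m, Suc p)"])
    fix a assume "a \<in> {..<Suc m} \<times> {..Suc m}"
    then obtain i k where a: "a = (i, k)" "i < Suc m" "k \<le> Suc m" by auto
    show "(\<lambda>(p, j). if j \<le> m - p then (j + p, p) else (j + p - Suc m, Suc p))
         ((\<lambda>(i, k). if k \<le> i then (k, i - k) else (k - 1, Suc m + Suc i - k)) a) = a"
      using a by auto
    show "(\<lambda>(i, k). if k \<le> i then (k, i - k) else (k - 1, Suc m + Suc i - k)) a \<in> {..m} \<times> {..Suc m}"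
      using a by auto
    show "(\<lambda>(p, j). (?T' ^^ p) (Dp l q (Suc m) j f)) ((\<lambda>(i, k). if k \<le> i then (k, i - k) else (k - 1, Suc m + Suc i - k)) a) =
        (\<lambda>(i, k). G i k) a"
      using a by (auto simp: G_def)
  next
    fix b assume "b \<in> {..m} \<times> {..Suc m}"
    then obtain p j where b: "b = (p, j)" "p \<le> m" "j \<le> Suc m" by auto
    show "(\<lambda>(i, k). if k \<le> i then (k, i - k) else (k - 1, Suc m + Suc i - k))
         ((\<lambda>(p, j). if j \<le> m - p then (j + p, p) else (j + p - Suc m, Suc p)) b) = b"
      using b by auto
    show "(\<lambda>(p, j). if j \<le> m - p then (j + p, p) else (j + p - Suc m, Suc p)) b \<in> {..<Suc m} \<times> {..Suc m}"
      using b by auto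
  qed
  also have "\<dots> = (\<Sum>p\<le>m. \<Sum>j\<le>Suc m. (?T' ^^ p) (Dp l q (Suc m) j f))"
    by (rule sum.cartesian_product[symmetric])
  also have "\<dots> = (\<Sum>p\<le>m. (?T' ^^ p) (\<Sum>j\<le>Suc m. Dp l q (Suc m) j f))"
    using tens_fs[OF Dp_tens[OF f]] by (intro sum.cong refl lin_sum[OF lin_taupow, symmetric]) simp
  also have "\<dots> = Nm l q m (bdry l q (Suc m) f)"
    by (simp add: Nm_def bdry_Dp)
  finally show ?thesis .
qed

lemma taupow_cyc: "fs f \<Longrightarrow> (tau l q n ^^ k) f = scal ((-1) ^ (n * k)) ((cyc l q n ^^ k) f)"
proof (induction k)
  case 0 then show ?case by simp
next
  case (Suc k)
  have fk: "fs ((cyc l q n ^^ k) f)" using Suc.prems by (rule linD(3)[OF lin_funpow[OF lin_cyc]])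
  have "(tau l q n ^^ Suc k) f = tau l q n ((tau l q n ^^ k) f)" by (simp only: funpow.simps comp_apply)
  also have "\<dots> = tau l q n (scal ((-1) ^ (n * k)) ((cyc l q n ^^ k) f))" by (simp only: Suc.IH[OF Suc.prems])
  also have "\<dots> = scal ((-1) ^ n) (cyc l q n (scal ((-1) ^ (n * k)) ((cyc l q n ^^ k) f)))" by (rule tau_def)
  also have "\<dots> = scal ((-1) ^ (n * Suc k)) ((cyc l q n ^^ Suc k) f)"
    using fk by (simp add: cyc_scal scal_scal power_add)
  finally show ?case .
qed

lemma taupow_T: "fs f \<Longrightarrow> (tau l q n ^^ Suc n) f = Tcyc l q n f"
proof -
  assume f: "fs f"
  have "even (n * Suc n)" by simp
  then have "(-1 :: complex) ^ (n * Suc n) = 1" by simp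
  then show ?thesis using taupow_cyc[OF f, where l=l and q=q and n=n and k="Suc n"] by (simp add: Tcyc_def)
qed

lemma Nm_tel1:
  assumes f: "fs f"
  shows "Nm l q n f - tau l q n (Nm l q n f) = f - Tcyc l q n f"
proof -
  let ?T = "tau l q n"
  have fs1: "\<And>k. fs ((?T ^^ k) f)" using f by (rule linD(3)[OF lin_taupow])
  have "?T (Nm l q n f) = (\<Sum>k\<le>n. ?T ((?T ^^ k) f))"
    unfolding Nm_def
    apply (rule lin_sum)
     apply (rule lin_tau)
    apply (rule fs1)
    done
  also have "\<dots> = (\<Sum>k\<le>n. (?T ^^ Suc k) f)" by simp
  finally have e: "?T (Nm l q n f) = (\<Sum>k\<le>n. (?T ^^ Suc k) f)" .
  have "Nm l q n f - ?T (Nm l q n f) = (\<Sum>k\<le>n. (?T ^^ k) f - (?T ^^ Suc k) f)"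
    unfolding e by (simp add: Nm_def sum_subtractf)
  also have "\<dots> = (?T ^^ 0) f - (?T ^^ Suc n) f" by (rule sum_telescope)
  also have "\<dots> = f - Tcyc l q n f" using taupow_T[OF f] by simp
  finally show ?thesis .
qed

lemma Nm_tel2:
  assumes f: "fs f"
  shows "Nm l q n f - Nm l q n (tau l q n f) = f - Tcyc l q n f"
proof -
  let ?T = "tau l q n"
  have "Nm l q n (?T f) = (\<Sum>k\<le>n. (?T ^^ Suc k) f)"
    unfolding Nm_def by (simp only: funpow_Suc_apply)
  then have "Nm l q n f - Nm l q n (?T f) = (\<Sum>k\<le>n. (?T ^^ k) f - (?T ^^ Suc k) f)"
    unfolding Nm_def by (simp add: sum_subtractf)
  also have "\<dots> = (?T ^^ 0) f - (?T ^^ Suc n) f" by (rule sum_telescope)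
  also have "\<dots> = f - Tcyc l q n f" using taupow_T[OF f] by simp
  finally show ?thesis .
qed

lemma Nm_T:
  assumes f: "fs f"
  shows "Nm l q n (Tcyc l q n f) = Tcyc l q n (Nm l q n f)"
proof -
  let ?T = "tau l q n"
  have fs1: "\<And>k. fs ((?T ^^ k) f)" using f by (rule linD(3)[OF lin_taupow])
  have fT: "fs (Tcyc l q n f)" using f by (rule linD(3)[OF lin_Tcyc])
  have "Nm l q n (Tcyc l q n f) = (\<Sum>k\<le>n. (?T ^^ k) ((?T ^^ Suc n) f))"
    unfolding Nm_def using taupow_T[OF f] by simp
  also have "\<dots> = (\<Sum>k\<le>n. (?T ^^ Suc n) ((?T ^^ k) f))"
    by (intro sum.cong refl) (metis add.commute comp_apply funpow_add)
  also have "\<dots> = (\<Sum>k\<le>n. Tcyc l q n ((?T ^^ k) f))"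
    using fs1 by (intro sum.cong refl taupow_T)
  also have "\<dots> = Tcyc l q n (Nm l q n f)"
    unfolding Nm_def using lin_sum[OF lin_Tcyc, of "{..n}" "\<lambda>k. (?T ^^ k) f"] fs1 by simp
  finally show ?thesis .
qed


definition sig :: "(nat list \<Rightarrow> complex) \<Rightarrow> (nat list \<Rightarrow> complex)" where
  "sig = matop (\<lambda>w. \<Sum>m<hd w. basis ((hd w - m) # m # tl w))"

definition rho :: "(nat list \<Rightarrow> complex) \<Rightarrow> (nat list \<Rightarrow> complex)" where
  "rho = matop (\<lambda>w. \<Sum>m<w ! 1. basis ((w ! 0 + w ! 1 - m) # m # drop 2 w))"

definition diag :: "(nat list \<Rightarrow> complex) \<Rightarrow> (nat list \<Rightarrow> complex) \<Rightarrow> (nat list \<Rightarrow> complex)" where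
  "diag g f = (\<lambda>w. g w * f w)"

definition E0 :: "(nat list \<Rightarrow> complex) \<Rightarrow> (nat list \<Rightarrow> complex)" where
  "E0 = diag (\<lambda>w. of_nat (hd w))"

lemma lin_sig[simp]: "lin sig" unfolding sig_def by (rule lin_matop) simp
lemma lin_rho[simp]: "lin rho" unfolding rho_def by (rule lin_matop) simp

lemma sig_basis: "sig (basis w) = (\<Sum>m<hd w. basis ((hd w - m) # m # tl w))"
  unfolding sig_def by (rule matop_basis)
lemma rho_basis: "rho (basis w) = (\<Sum>m<w ! 1. basis ((w ! 0 + w ! 1 - m) # m # drop 2 w))"
  unfolding rho_def by (rule matop_basis)

lemma lin_diag[simp]: "lin (diag g)"
proof -
  have "fs (diag g f)" if "fs f" for f
  proof -
    have "{w. diag g f w \<noteq> 0} \<subseteq> {w. f w \<noteq> 0}" by (auto simp: diag_def)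
    then show ?thesis using that unfolding fs_def using finite_subset by blast
  qed
  then show ?thesis unfolding lin_def by (auto simp: diag_def fun_eq_iff scal_apply algebra_simps)
qed

lemma lin_E0[simp]: "lin E0" unfolding E0_def by simp

lemma diag_basis: "diag g (basis w) = scal (g w) (basis w)"
  by (auto simp: diag_def basis_def scal_apply fun_eq_iff)

lemma E0_basis: "E0 (basis w) = scal (of_nat (hd w)) (basis w)"
  by (simp add: E0_def diag_basis)

lemma sig_tens[simp]: "f \<in> tens n \<Longrightarrow> sig f \<in> tens (Suc n)"
proof (rule tens_map[OF lin_sig])
  fix w :: "nat list" assume "length w = Suc n"
  then show "sig (basis w) \<in> tens (Suc n)" by (cases w) (auto simp: sig_basis)
qed

lemma rho_tens[simp]: "f \<in> tens (Suc n) \<Longrightarrow> rho f \<in> tens (Suc n)"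
proof (rule tens_map[OF lin_rho])
  fix w :: "nat list" assume "length w = Suc (Suc n)"
  then show "rho (basis w) \<in> tens (Suc n)" by (auto simp: rho_basis)
qed

lemma diag_tens[simp]: "f \<in> tens n \<Longrightarrow> diag g f \<in> tens n"
proof -
  assume a: "f \<in> tens n"
  have "fs (diag g f)" by (rule linD(3)[OF lin_diag tens_fs[OF a]])
  then show ?thesis using a by (auto simp: tens_iff diag_def)
qed

lemma E0_tens[simp]: "f \<in> tens n \<Longrightarrow> E0 f \<in> tens n"
  by (simp add: E0_def)

lemma sum_lessThan_add:
  fixes g :: "nat \<Rightarrow> 'a :: comm_monoid_add"
  shows "(\<Sum>i<a + b. g i) = (\<Sum>i<a. g i) + (\<Sum>i<b. g (a + i))"
  by (induction b) (simp_all add: add.assoc)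

lemma Dp_basis_lt: "j < N \<Longrightarrow> Dp l q N j (basis u) = scal ((-1) ^ j) (basis (mrg j u))"
  by (simp add: Dp_def face_def mu_basis)

lemma Dp_basis_eq: "length u = Suc N \<Longrightarrow> Dp l q N N (basis u) = scal ((-1) ^ N * cc l q u) (basis (mrg 0 (rotr u)))"
  by (simp add: Dp_def face_def cyc_basis mu_scal mu_basis scal_scal)

lemma bp_basis: "bp l q N (basis w) = (\<Sum>i<N. scal ((-1) ^ i) (basis (mrg i w)))"
  unfolding bp_def by (intro sum.cong refl Dp_basis_lt) simp

lemma mrg_Suc_Suc: "mrg (Suc (Suc k)) (x # y # z) = x # y # mrg k z"
  by simp


lemma scal_m1: "scal (-1) f = - f" by (auto simp: scal_apply fun_eq_iff)

lemma J1_basis: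
  assumes len: "length w = Suc (Suc m)"
  shows "bdry l q (Suc (Suc m)) (sig (basis w)) + sig (bp l q (Suc m) (basis w))
       = E0 (basis w) + rho (basis w - tau l q (Suc m) (basis w))"
proof -
  obtain a0 a1 r where w: "w = a0 # a1 # r" and lr: "length r = m"
    using len by (cases w; cases "tl w") auto
  define v where "v = a1 # r"
  have vne: "v \<noteq> []" by (simp add: v_def)
  define L where "L = last v"
  define BL where "BL = butlast v"
  define N where "N = Suc (Suc m)"
  define u where "u = (\<lambda>m'. (a0 - m') # m' # v)"
  define Y where "Y = (\<lambda>k. \<Sum>m'<a0. basis ((a0 - m') # m' # mrg k v))"
  define X where "X = (\<lambda>j. \<Sum>m'<a0. Dp l q N j (basis (u m')))"
  have lu: "\<And>m'. length (u m') = Suc N" using lr by (simp add: u_def v_def N_def)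
  have sigw: "sig (basis w) = (\<Sum>m'<a0. basis (u m'))" by (simp add: sig_basis w u_def v_def)
  have B: "bdry l q N (sig (basis w)) = (\<Sum>j\<le>N. X j)"
  proof -
    have "bdry l q N (sig (basis w)) = (\<Sum>m'<a0. bdry l q N (basis (u m')))"
      unfolding sigw by (rule lin_sum[OF lin_bdry]) simp
    also have "\<dots> = (\<Sum>m'<a0. \<Sum>j\<le>N. Dp l q N j (basis (u m')))" by (simp add: bdry_Dp)
    also have "\<dots> = (\<Sum>j\<le>N. X j)" unfolding X_def by (rule sum.swap)
    finally show ?thesis .
  qed
  have split: "(\<Sum>j\<le>N. X j) = X 0 + X 1 + (\<Sum>k<m. X (Suc (Suc k))) + X N"
  proof -
    have e1: "(\<Sum>j\<le>Suc (Suc m). X j) = (\<Sum>j\<le>Suc m. X j) + X (Suc (Suc m))" by (rule sum.atMost_Suc)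
    have e2: "(\<Sum>j\<le>Suc m. X j) = X 0 + (\<Sum>j\<le>m. X (Suc j))" by (rule sum.atMost_Suc_shift)
    have e3: "(\<Sum>j\<le>m. X (Suc j)) = X (Suc 0) + (\<Sum>k<m. X (Suc (Suc k)))" by (rule sum.atMost_shift)
    show ?thesis unfolding N_def e1 e2 e3 by (simp add: add.assoc)
  qed
  have X0: "X 0 = scal (of_nat a0) (basis w)"
  proof -
    have "X 0 = (\<Sum>m'<a0. basis w)"
      unfolding X_def by (intro sum.cong refl) (simp add: Dp_basis_lt N_def u_def w v_def)
    also have "\<dots> = scal (\<Sum>m'<a0. 1) (basis w)" by (simp only: scal_sum_left scal_1)
    also have "(\<Sum>m'<a0. (1::complex)) = of_nat a0" by simp
    finally show ?thesis .
  qed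
  have X1: "X 1 = - (\<Sum>m'<a0. basis ((a0 - m') # (m' + a1) # r))"
  proof -
    have "X 1 = (\<Sum>m'<a0. scal (-1) (basis ((a0 - m') # (m' + a1) # r)))"
      unfolding X_def by (intro sum.cong refl) (simp add: Dp_basis_lt N_def u_def v_def mrg_def)
    then show ?thesis by (simp add: scal_m1 sum_negf)
  qed
  have Xk: "X (Suc (Suc k)) = scal ((-1) ^ k) (Y k)" if "k < m" for k
  proof -
    have "X (Suc (Suc k)) = (\<Sum>m'<a0. scal ((-1) ^ k) (basis ((a0 - m') # m' # mrg k v)))"
      unfolding X_def using that by (intro sum.cong refl) (simp add: Dp_basis_lt N_def u_def)
    then show ?thesis by (simp add: Y_def scal_sum)
  qed
  have ccu: "cc l q (u m') = cc l q w" if "m' < a0" for m'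
    using that vne by (simp add: cc_def u_def w v_def)
  have rotu: "rotr (u m') = L # (a0 - m') # m' # BL" for m'
    using vne by (simp add: rotr_def u_def L_def BL_def)
  have XN: "X N = scal ((-1) ^ N * cc l q w) (\<Sum>m'<a0. basis ((L + (a0 - m')) # m' # BL))"
  proof -
    have "X N = (\<Sum>m'<a0. scal ((-1) ^ N * cc l q w) (basis ((L + (a0 - m')) # m' # BL)))"
      unfolding X_def by (intro sum.cong refl) (simp add: Dp_basis_eq[OF lu] ccu rotu)
    then show ?thesis by (simp add: scal_sum)
  qed
  have S: "sig (bp l q (Suc m) (basis w)) = sig (basis ((a0 + a1) # r)) + (\<Sum>k<m. scal ((-1) ^ Suc k) (Y k))"
  proof -
    have "sig (bp l q (Suc m) (basis w)) = (\<Sum>i<Suc m. sig (scal ((-1) ^ i) (basis (mrg i w))))"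
      unfolding bp_basis by (rule lin_sum[OF lin_sig]) simp
    also have "\<dots> = (\<Sum>i<Suc m. scal ((-1) ^ i) (sig (basis (mrg i w))))"
      by (intro sum.cong refl linD(2)[OF lin_sig]) simp
    also have "\<dots> = sig (basis ((a0 + a1) # r)) + (\<Sum>k<m. scal ((-1) ^ Suc k) (sig (basis (mrg (Suc k) w))))"
      by (simp add: sum.lessThan_Suc_shift w del: sum.lessThan_Suc)
    also have "\<dots> = sig (basis ((a0 + a1) # r)) + (\<Sum>k<m. scal ((-1) ^ Suc k) (Y k))"
      by (intro arg_cong2[where f="(+)"] sum.cong refl) (simp_all add: w sig_basis Y_def v_def[symmetric])
    finally show ?thesis .
  qed
  have cancel: "(\<Sum>k<m. X (Suc (Suc k))) + (\<Sum>k<m. scal ((-1) ^ Suc k) (Y k)) = 0"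
  proof -
    have "(\<Sum>k<m. X (Suc (Suc k))) = (\<Sum>k<m. scal ((-1) ^ k) (Y k))"
      by (intro sum.cong refl Xk) simp
    moreover have "scal ((-1) ^ k) (Y k) + scal ((-1) ^ Suc k) (Y k) = 0" for k
      by (simp add: scal_add_left[symmetric])
    ultimately show ?thesis by (simp add: sum.distrib[symmetric])
  qed
  have rhow: "rho (basis w) = (\<Sum>m'<a1. basis ((a0 + a1 - m') # m' # r))"
    by (simp add: rho_basis w)
  have S0: "sig (basis ((a0 + a1) # r)) = rho (basis w) + (\<Sum>m'<a0. basis ((a0 - m') # (m' + a1) # r))"
  proof -
    have "sig (basis ((a0 + a1) # r)) = (\<Sum>m'<a1 + a0. basis ((a0 + a1 - m') # m' # r))"
      by (simp add: sig_basis add.commute)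
    also have "\<dots> = (\<Sum>m'<a1. basis ((a0 + a1 - m') # m' # r)) + (\<Sum>m'<a0. basis ((a0 + a1 - (a1 + m')) # (a1 + m') # r))"
      by (rule sum_lessThan_add)
    also have "\<dots> = (\<Sum>m'<a1. basis ((a0 + a1 - m') # m' # r)) + (\<Sum>m'<a0. basis ((a0 - m') # (m' + a1) # r))"
      by (intro arg_cong2[where f="(+)"] sum.cong refl) (simp_all add: add.commute)
    finally show ?thesis using rhow by simp
  qed
  have rhotau: "rho (tau l q (Suc m) (basis w)) = scal ((-1) ^ Suc m * cc l q w) (\<Sum>m'<a0. basis ((L + (a0 - m')) # m' # BL))"
  proof -
    have rw: "rotr w = L # a0 # BL" using vne by (simp add: rotr_def w v_def[symmetric] L_def BL_def)
    have "rho (tau l q (Suc m) (basis w)) = scal ((-1) ^ Suc m * cc l q w) (rho (basis (L # a0 # BL)))"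
      using len by (simp add: tau_def cyc_basis scal_scal rw linD(2)[OF lin_rho])
    also have "rho (basis (L # a0 # BL)) = (\<Sum>m'<a0. basis ((L + (a0 - m')) # m' # BL))"
      unfolding rho_basis by (intro sum.cong refl) simp_all
    finally show ?thesis .
  qed
  have XN2: "X N = - rho (tau l q (Suc m) (basis w))"
  proof -
    have "X N = scal (-1) (rho (tau l q (Suc m) (basis w)))"
      unfolding XN rhotau scal_scal by (simp add: N_def)
    then show ?thesis by (simp only: scal_m1)
  qed
  have rhodiff: "rho (basis w - tau l q (Suc m) (basis w)) = rho (basis w) - rho (tau l q (Suc m) (basis w))"
    by (rule lin_diff[OF lin_rho]) (simp_all add: linD(3)[OF lin_tau])
  have "bdry l q (Suc (Suc m)) (sig (basis w)) + sig (bp l q (Suc m) (basis w))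
      = X 0 + X 1 + ((\<Sum>k<m. X (Suc (Suc k))) + (\<Sum>k<m. scal ((-1) ^ Suc k) (Y k))) + X N + sig (basis ((a0 + a1) # r))"
    using B split S N_def by (simp add: algebra_simps)
  also have "\<dots> = scal (of_nat a0) (basis w) + rho (basis w) - rho (tau l q (Suc m) (basis w))"
    unfolding cancel X0 X1 XN2 S0 by (simp add: algebra_simps)
  also have "\<dots> = E0 (basis w) + rho (basis w - tau l q (Suc m) (basis w))"
    unfolding rhodiff by (simp add: E0_basis w algebra_simps)
  finally show ?thesis .
qed


lemma J1:
  assumes f: "f \<in> tens (Suc m)"
  shows "bdry l q (Suc (Suc m)) (sig f) + sig (bp l q (Suc m) f) = E0 f + rho (f - tau l q (Suc m) f)"
proof (rule lin_ext[where F="\<lambda>f. bdry l q (Suc (Suc m)) (sig f) + sig (bp l q (Suc m) f)"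
      and G="\<lambda>f. E0 f + rho (f - tau l q (Suc m) f)"])
  show "lin (\<lambda>f. bdry l q (Suc (Suc m)) (sig f) + sig (bp l q (Suc m) f))"
    by (rule lin_add; rule lin_comp') simp_all
  have "lin (\<lambda>f. f - tau l q (Suc m) f)" by (rule lin_diffop) simp_all
  then show "lin (\<lambda>f. E0 f + rho (f - tau l q (Suc m) f))"
    by (intro lin_add lin_E0) (rule lin_comp'[OF lin_rho])
  show "fs f" by (rule tens_fs[OF f])
  fix w assume "w \<in> supp f"
  then have "length w = Suc (Suc m)" using tens_len[OF f] by simp
  then show "bdry l q (Suc (Suc m)) (sig (basis w)) + sig (bp l q (Suc m) (basis w)) =
      E0 (basis w) + rho (basis w - tau l q (Suc m) (basis w))" by (rule J1_basis)
qed

lemma relW_iff: "g \<in> relW l q n \<longleftrightarrow> (\<exists>f1\<in>tens n. \<exists>f2\<in>tens n.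
      g = (f1 - Tcyc l q n f1) + (f2 - scal ((-1) ^ n) (cyc l q n f2)))"
  by (simp add: relW_def)

lemma T_add: "fs f \<Longrightarrow> fs g \<Longrightarrow> Tcyc l q n (f + g) = Tcyc l q n f + Tcyc l q n g" by (rule linD(1)[OF lin_Tcyc])
lemma cyc_add: "fs f \<Longrightarrow> fs g \<Longrightarrow> cyc l q n (f + g) = cyc l q n f + cyc l q n g" by (rule linD(1)[OF lin_cyc])
lemma T_scal: "fs f \<Longrightarrow> Tcyc l q n (scal c f) = scal c (Tcyc l q n f)" by (rule linD(2)[OF lin_Tcyc])

lemma relW_add: "g \<in> relW l q n \<Longrightarrow> g' \<in> relW l q n \<Longrightarrow> g + g' \<in> relW l q n"
proof -
  assume "g \<in> relW l q n" "g' \<in> relW l q n"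
  then obtain f1 f2 f1' f2' where f: "f1 \<in> tens n" "f2 \<in> tens n" "f1' \<in> tens n" "f2' \<in> tens n"
    and g: "g = (f1 - Tcyc l q n f1) + (f2 - scal ((-1) ^ n) (cyc l q n f2))"
    and g': "g' = (f1' - Tcyc l q n f1') + (f2' - scal ((-1) ^ n) (cyc l q n f2'))"
    unfolding relW_iff by blast
  have fs: "fs f1" "fs f2" "fs f1'" "fs f2'" using f by (simp_all add: tens_fs)
  have "g + g' = ((f1 + f1') - Tcyc l q n (f1 + f1')) + ((f2 + f2') - scal ((-1) ^ n) (cyc l q n (f2 + f2')))"
    unfolding g g' T_add[OF fs(1,3)] cyc_add[OF fs(2,4)] scal_add by (simp add: algebra_simps)
  then show ?thesis unfolding relW_iff using f by (intro bexI[of _ "f1 + f1'"] bexI[of _ "f2 + f2'"]) auto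
qed

lemma relW_scal: "g \<in> relW l q n \<Longrightarrow> scal c g \<in> relW l q n"
proof -
  assume "g \<in> relW l q n"
  then obtain f1 f2 where f: "f1 \<in> tens n" "f2 \<in> tens n"
    and g: "g = (f1 - Tcyc l q n f1) + (f2 - scal ((-1) ^ n) (cyc l q n f2))"
    unfolding relW_iff by blast
  have fs: "fs f1" "fs f2" using f by (simp_all add: tens_fs)
  have "scal c g = (scal c f1 - Tcyc l q n (scal c f1)) + (scal c f2 - scal ((-1) ^ n) (cyc l q n (scal c f2)))"
    unfolding g T_scal[OF fs(1)] cyc_scal[OF fs(2)] scal_add scal_diff scal_scal by (simp add: mult.commute)
  then show ?thesis unfolding relW_iff using f by (intro bexI[of _ "scal c f1"] bexI[of _ "scal c f2"]) auto
qed

lemma relW_0[simp]: "0 \<in> relW l q n"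
  unfolding relW_iff by (intro bexI[of _ 0]) (auto simp: lin_zero[OF lin_Tcyc] lin_zero[OF lin_cyc])

lemma relW_uminus: "g \<in> relW l q n \<Longrightarrow> - g \<in> relW l q n"
  using relW_scal[of g l q n "-1"] by (simp add: scal_m1)

lemma relW_diff: "g \<in> relW l q n \<Longrightarrow> g' \<in> relW l q n \<Longrightarrow> g - g' \<in> relW l q n"
  using relW_add[of g l q n "- g'"] relW_uminus[of g' l q n] by simp

lemma relW_sum: "(\<And>a. a \<in> A \<Longrightarrow> g a \<in> relW l q n) \<Longrightarrow> (\<Sum>a\<in>A. g a) \<in> relW l q n"
  by (induction A rule: infinite_finite_induct) (auto intro: relW_add)

lemma relW_T: "f \<in> tens n \<Longrightarrow> f - Tcyc l q n f \<in> relW l q n"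
  unfolding relW_iff by (intro bexI[of _ f] bexI[of _ 0]) (auto simp: lin_zero[OF lin_cyc])

lemma relW_tau: "f \<in> tens n \<Longrightarrow> f - tau l q n f \<in> relW l q n"
  unfolding relW_iff tau_def by (intro bexI[of _ 0] bexI[of _ f]) (auto simp: lin_zero[OF lin_Tcyc])

lemma relW_tens: "g \<in> relW l q n \<Longrightarrow> g \<in> tens n"
  unfolding relW_iff by auto


definition Etot :: "(nat list \<Rightarrow> complex) \<Rightarrow> (nat list \<Rightarrow> complex)" where
  "Etot = diag (\<lambda>w. of_nat (sum_list w))"

definition Einv :: "(nat list \<Rightarrow> complex) \<Rightarrow> (nat list \<Rightarrow> complex)" where
  "Einv = diag (\<lambda>w. if sum_list w = 0 then 0 else inverse (of_nat (sum_list w)))"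

lemma lin_Etot[simp]: "lin Etot" by (simp add: Etot_def)
lemma lin_Einv[simp]: "lin Einv" by (simp add: Einv_def)
lemma Etot_tens[simp]: "f \<in> tens n \<Longrightarrow> Etot f \<in> tens n" by (simp add: Etot_def)
lemma Einv_tens[simp]: "f \<in> tens n \<Longrightarrow> Einv f \<in> tens n" by (simp add: Einv_def)

lemma taupow_basis:
  assumes "length w = Suc n"
  shows "\<exists>c. (tau l q n ^^ k) (basis w) = scal c (basis ((rotr ^^ k) w))"
  using taupow_cyc[OF fs_basis[of w], where l=l and q=q and n=n and k=k]
    cyc_pow_basis[OF assms, where l=l and q=q and k=k] by (auto simp: scal_scal)

lemma taupow_diff_relW: "g \<in> tens n \<Longrightarrow> (tau l q n ^^ k) g - g \<in> relW l q n"
proof (induction k)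
  case 0 show ?case by (simp only: funpow_0 diff_self relW_0)
next
  case (Suc k)
  have h: "(tau l q n ^^ k) g \<in> tens n" using Suc.prems by simp
  have "(tau l q n ^^ Suc k) g - g = - ((tau l q n ^^ k) g - tau l q n ((tau l q n ^^ k) g)) + ((tau l q n ^^ k) g - g)"
    by (simp add: algebra_simps)
  also have "\<dots> \<in> relW l q n"
  proof -
    have a: "(tau l q n ^^ k) g - g \<in> relW l q n" using Suc.IH Suc.prems by blast
    have b: "(tau l q n ^^ k) g - tau l q n ((tau l q n ^^ k) g) \<in> relW l q n" by (rule relW_tau[OF h])
    show ?thesis by (rule relW_add[OF relW_uminus[OF b] a])
  qed
  finally show ?case .
qed

lemma sum_hd_rotr:
  assumes len: "length w = Suc n"
  shows "(\<Sum>k\<le>n. hd ((rotr ^^ k) w)) = sum_list w"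
proof -
  have "(\<Sum>k\<le>n. hd ((rotr ^^ k) w)) = (\<Sum>k<Suc n. w ! ((Suc n - k) mod Suc n))"
    using len by (intro sum.cong) (auto simp: hd_rotr_pow)
  also have "\<dots> = (\<Sum>k<Suc n. w ! k)"
  proof (rule sum.reindex_bij_witness[where i="\<lambda>k. (Suc n - k) mod Suc n" and j="\<lambda>k. (Suc n - k) mod Suc n"])
    have aux: "(Suc n - (Suc n - a) mod Suc n) mod Suc n = a" if a: "a \<in> {..<Suc n}" for a
    proof (cases "a = 0")
      case True then show ?thesis by simp
    next
      case False then have "(Suc n - a) mod Suc n = Suc n - a" using a by simp
      then show ?thesis using a False by simp
    qed
    fix a assume a: "a \<in> {..<Suc n}"
    show "(Suc n - (Suc n - a) mod Suc n) mod Suc n = a" by (rule aux[OF a])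
    show "(Suc n - a) mod Suc n \<in> {..<Suc n}" by simp
    show "w ! ((Suc n - a) mod Suc n) = w ! ((Suc n - a) mod Suc n)" by simp
  next
    fix b assume b: "b \<in> {..<Suc n}"
    show "(Suc n - (Suc n - b) mod Suc n) mod Suc n = b"
    proof (cases "b = 0")
      case True then show ?thesis by simp
    next
      case False then have "(Suc n - b) mod Suc n = Suc n - b" using b by simp
      then show ?thesis using b False by simp
    qed
    show "(Suc n - b) mod Suc n \<in> {..<Suc n}" by simp
  qed
  also have "\<dots> = sum_list w" using len by (simp add: sum_list_sum_nth atLeast0LessThan)
  finally show ?thesis .
qed

lemma J3_basis:
  assumes len: "length w = Suc n"
  shows "E0 (Nm l q n (basis w)) - Etot (basis w) \<in> relW l q n"
proof -
  let ?T = "tau l q n"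
  define h where "h = (\<lambda>k. (of_nat (hd ((rotr ^^ k) w)) :: complex))"
  have e0: "E0 ((?T ^^ k) (basis w)) = scal (h k) ((?T ^^ k) (basis w))" for k
  proof -
    obtain c where c: "(?T ^^ k) (basis w) = scal c (basis ((rotr ^^ k) w))" using taupow_basis[OF len] by blast
    show ?thesis unfolding c by (simp add: linD(2)[OF lin_E0] E0_basis scal_scal h_def mult.commute)
  qed
  have "E0 (Nm l q n (basis w)) = (\<Sum>k\<le>n. scal (h k) ((?T ^^ k) (basis w)))"
    unfolding Nm_def by (subst lin_sum[OF lin_E0]) (simp_all add: e0 linD(3)[OF lin_taupow])
  moreover have "Etot (basis w) = (\<Sum>k\<le>n. scal (h k) (basis w))"
  proof -
    have "(\<Sum>k\<le>n. h k) = of_nat (sum_list w)" unfolding h_def using sum_hd_rotr[OF len] by (metis of_nat_sum)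
    then show ?thesis by (simp add: Etot_def diag_basis scal_sum_left[symmetric])
  qed
  ultimately have "E0 (Nm l q n (basis w)) - Etot (basis w) = (\<Sum>k\<le>n. scal (h k) ((?T ^^ k) (basis w) - basis w))"
    by (simp add: sum_subtractf scal_diff)
  also have "\<dots> \<in> relW l q n" using len by (intro relW_sum relW_scal taupow_diff_relW) simp
  finally show ?thesis .
qed

lemma relW_lin_span:
  assumes "lin F" "f \<in> tens n" "\<And>w. length w = Suc n \<Longrightarrow> F (basis w) \<in> relW l q m"
  shows "F f \<in> relW l q m"
proof -
  have "F f = (\<Sum>w\<in>supp f. scal (f w) (F (basis w)))" by (rule lin_rep[OF assms(1) tens_fs[OF assms(2)]])
  also have "\<dots> \<in> relW l q m" using assms(3) tens_len[OF assms(2)] by (intro relW_sum relW_scal) auto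
  finally show ?thesis .
qed

lemma J3:
  assumes f: "f \<in> tens n"
  shows "E0 (Nm l q n f) - Etot f \<in> relW l q n"
proof -
  have "lin (\<lambda>f. E0 (Nm l q n f) - Etot f)" by (intro lin_diffop lin_Etot) (rule lin_comp'; simp)
  then show ?thesis using f by (rule relW_lin_span) (rule J3_basis)
qed


lemma scal_basis_nz: "scal c (basis u) v \<noteq> 0 \<Longrightarrow> v = u"
  by (auto simp: scal_apply basis_def split: if_splits)

lemma sum_fun_nz: "(\<Sum>j\<in>A. g j) v \<noteq> 0 \<Longrightarrow> \<exists>j\<in>A. g j v \<noteq> 0"
proof (rule ccontr)
  assume a: "(\<Sum>j\<in>A. g j) v \<noteq> 0" "\<not> (\<exists>j\<in>A. g j v \<noteq> 0)"
  then have "(\<Sum>j\<in>A. g j v) = 0" by (intro sum.neutral) auto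
  then show False using a(1) by (simp add: sum_fun_apply)
qed

lemma diag_comm:
  assumes F: "lin F" and f: "f \<in> tens n"
    and deg: "\<And>w v. length w = Suc n \<Longrightarrow> F (basis w) v \<noteq> 0 \<Longrightarrow> sum_list v = sum_list w"
  shows "F (diag (\<lambda>w. d (sum_list w)) f) = diag (\<lambda>w. d (sum_list w)) (F f)"
proof (rule lin_ext[where F="\<lambda>f. F (diag (\<lambda>w. d (sum_list w)) f)" and G="\<lambda>f. diag (\<lambda>w. d (sum_list w)) (F f)"])
  show "lin (\<lambda>f. F (diag (\<lambda>w. d (sum_list w)) f))" by (rule lin_comp'[OF F lin_diag])
  show "lin (\<lambda>f. diag (\<lambda>w. d (sum_list w)) (F f))" by (rule lin_comp'[OF lin_diag F])
  show "fs f" by (rule tens_fs[OF f])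
  fix w assume "w \<in> supp f"
  then have len: "length w = Suc n" using tens_len[OF f] by simp
  have "F (diag (\<lambda>w. d (sum_list w)) (basis w)) = scal (d (sum_list w)) (F (basis w))"
    by (simp add: diag_basis linD(2)[OF F])
  also have "\<dots> = diag (\<lambda>w. d (sum_list w)) (F (basis w))"
  proof
    fix v show "scal (d (sum_list w)) (F (basis w)) v = diag (\<lambda>w. d (sum_list w)) (F (basis w)) v"
      using deg[OF len, of v] by (cases "F (basis w) v = 0") (auto simp: scal_apply diag_def)
  qed
  finally show "F (diag (\<lambda>w. d (sum_list w)) (basis w)) = diag (\<lambda>w. d (sum_list w)) (F (basis w))" .
qed

lemma deg_cyc: "length w = Suc n \<Longrightarrow> cyc l q n (basis w) v \<noteq> 0 \<Longrightarrow> sum_list v = sum_list w"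
proof -
  assume a: "length w = Suc n" "cyc l q n (basis w) v \<noteq> 0"
  then have "v = rotr w" by (auto simp: cyc_basis dest!: scal_basis_nz)
  moreover have "w \<noteq> []" using a by auto
  ultimately show ?thesis by simp
qed

lemma deg_Tcyc: "length w = Suc n \<Longrightarrow> Tcyc l q n (basis w) v \<noteq> 0 \<Longrightarrow> sum_list v = sum_list w"
  by (auto simp: Tcyc_basis dest!: scal_basis_nz)

lemma deg_bdry:
  assumes len: "length w = Suc (Suc m)" and nz: "bdry l q (Suc m) (basis w) v \<noteq> 0"
  shows "sum_list v = sum_list w"
proof -
  obtain j where j: "j \<le> Suc m" "Dp l q (Suc m) j (basis w) v \<noteq> 0"
    using sum_fun_nz[of "\<lambda>j. Dp l q (Suc m) j (basis w)" "{..Suc m}" v] nz by (auto simp: bdry_Dp)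
  show ?thesis
  proof (cases "j < Suc m")
    case True
    then have "v = mrg j w" using j by (auto simp: Dp_basis_lt dest!: scal_basis_nz)
    then show ?thesis using True len by (simp add: sum_list_mrg)
  next
    case False
    then have jj: "j = Suc m" using j by simp
    have ne: "w \<noteq> []" using len by auto
    then have lr: "length (rotr w) = Suc (Suc m)" using len by simp
    have "v = mrg 0 (rotr w)" using j jj len by (auto simp: Dp_basis_eq dest!: scal_basis_nz)
    then show ?thesis using lr ne by (simp add: sum_list_mrg)
  qed
qed

definition ed :: "nat \<Rightarrow> complex" where
  "ed S = (if S = 0 then 0 else inverse (of_nat S))"

lemma Einv_eq: "Einv = diag (\<lambda>w. ed (sum_list w))"
  by (simp add: Einv_def ed_def)

lemma Einv_bdry: "f \<in> tens (Suc m) \<Longrightarrow> Einv (bdry l q (Suc m) f) = bdry l q (Suc m) (Einv f)"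
  unfolding Einv_eq by (rule diag_comm[OF lin_bdry, symmetric]) (auto intro: deg_bdry)

lemma Einv_cyc: "f \<in> tens n \<Longrightarrow> Einv (cyc l q n f) = cyc l q n (Einv f)"
  unfolding Einv_eq by (rule diag_comm[OF lin_cyc, symmetric]) (auto intro: deg_cyc)

lemma Einv_Tcyc: "f \<in> tens n \<Longrightarrow> Einv (Tcyc l q n f) = Tcyc l q n (Einv f)"
  unfolding Einv_eq by (rule diag_comm[OF lin_Tcyc, symmetric]) (auto intro: deg_Tcyc)

lemma Einv_relW: "g \<in> relW l q n \<Longrightarrow> Einv g \<in> relW l q n"
proof -
  assume "g \<in> relW l q n"
  then obtain f1 f2 where f: "f1 \<in> tens n" "f2 \<in> tens n"
    and g: "g = (f1 - Tcyc l q n f1) + (f2 - scal ((-1) ^ n) (cyc l q n f2))"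
    unfolding relW_iff by blast
  have fs: "fs f1" "fs f2" "fs (Tcyc l q n f1)" "fs (cyc l q n f2)"
    using f tens_fs[OF Tcyc_tens[OF f(1)]] tens_fs[OF cyc_tens[OF f(2)]] by (simp_all add: tens_fs)
  have "Einv g = (Einv f1 - Einv (Tcyc l q n f1)) + (Einv f2 - scal ((-1) ^ n) (Einv (cyc l q n f2)))"
    unfolding g using fs
    by (simp add: linD(1)[OF lin_Einv] lin_diff[OF lin_Einv] linD(2)[OF lin_Einv])
  also have "\<dots> = (Einv f1 - Tcyc l q n (Einv f1)) + (Einv f2 - scal ((-1) ^ n) (cyc l q n (Einv f2)))"
    using f by (simp add: Einv_Tcyc Einv_cyc)
  finally show ?thesis unfolding relW_iff using f by (intro bexI[of _ "Einv f1"] bexI[of _ "Einv f2"]) auto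
qed

lemma replicate_of_sum0: "length w = k \<Longrightarrow> sum_list w = 0 \<Longrightarrow> w = replicate k (0::nat)"
  by (induction w arbitrary: k) auto

lemma Etot_Einv:
  assumes z: "z \<in> tens n"
  shows "Etot (Einv z) = z - scal (z (replicate (Suc n) 0)) (basis (replicate (Suc n) 0))"
proof
  fix w
  show "Etot (Einv z) w = (z - scal (z (replicate (Suc n) 0)) (basis (replicate (Suc n) 0))) w"
  proof (cases "sum_list w = 0")
    case False then show ?thesis
      by (auto simp: Etot_def Einv_def diag_def scal_apply basis_def replicate_of_sum0)
  next
    case True
    show ?thesis
    proof (cases "w = replicate (Suc n) 0")
      case True then show ?thesis by (simp add: Etot_def Einv_def diag_def scal_apply basis_def)
    next
      case False
      have "z w = 0"
      proof (rule ccontr)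
        assume "z w \<noteq> 0"
        then have "length w = Suc n" using z by (simp add: tens_iff)
        then show False using False \<open>sum_list w = 0\<close> replicate_of_sum0 by blast
      qed
      then show ?thesis using False True by (simp add: Etot_def Einv_def diag_def scal_apply basis_def)
    qed
  qed
qed

lemma Tsig:
  assumes f: "f \<in> tens n"
  shows "Tcyc l q (Suc n) (sig f) = sig (Tcyc l q n f)"
proof (rule lin_ext[where F="\<lambda>f. Tcyc l q (Suc n) (sig f)" and G="\<lambda>f. sig (Tcyc l q n f)"])
  show "lin (\<lambda>f. Tcyc l q (Suc n) (sig f))" by (rule lin_comp') simp_all
  show "lin (\<lambda>f. sig (Tcyc l q n f))" by (rule lin_comp') simp_all
  show "fs f" by (rule tens_fs[OF f])
  fix w assume "w \<in> supp f"
  then have len: "length w = Suc n" using tens_len[OF f] by simp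
  then obtain a r where w: "w = a # r" and lr: "length r = n" by (cases w) auto
  have "Tcyc l q (Suc n) (sig (basis w)) = (\<Sum>m<a. Tcyc l q (Suc n) (basis ((a - m) # m # r)))"
    unfolding sig_basis w list.sel by (rule lin_sum[OF lin_Tcyc]) simp
  also have "\<dots> = (\<Sum>m<a. scal (kap l q (sum_list w)) (basis ((a - m) # m # r)))"
    using lr by (intro sum.cong refl) (simp add: Tcyc_basis w)
  also have "\<dots> = sig (Tcyc l q n (basis w))"
    using len by (simp add: Tcyc_basis linD(2)[OF lin_sig] sig_basis scal_sum w)
  finally show "Tcyc l q (Suc n) (sig (basis w)) = sig (Tcyc l q n (basis w))" .
qed

lemma Trho:
  assumes f: "f \<in> tens (Suc n)"
  shows "Tcyc l q (Suc n) (rho f) = rho (Tcyc l q (Suc n) f)"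
proof (rule lin_ext[where F="\<lambda>f. Tcyc l q (Suc n) (rho f)" and G="\<lambda>f. rho (Tcyc l q (Suc n) f)"])
  show "lin (\<lambda>f. Tcyc l q (Suc n) (rho f))" by (rule lin_comp') simp_all
  show "lin (\<lambda>f. rho (Tcyc l q (Suc n) f))" by (rule lin_comp') simp_all
  show "fs f" by (rule tens_fs[OF f])
  fix w assume "w \<in> supp f"
  then have len: "length w = Suc (Suc n)" using tens_len[OF f] by simp
  then obtain a b r where w: "w = a # b # r" and lr: "length r = n" by (cases w; cases "tl w") auto
  have "Tcyc l q (Suc n) (rho (basis w)) = (\<Sum>m<b. Tcyc l q (Suc n) (basis ((a + b - m) # m # r)))"
  proof -
    have e: "(a # b # r) ! 1 = b" "(a # b # r) ! 0 = a" "drop 2 (a # b # r) = r" by simp_all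
    show ?thesis unfolding rho_basis w e by (rule lin_sum[OF lin_Tcyc]) simp
  qed
  also have "\<dots> = (\<Sum>m<b. scal (kap l q (sum_list w)) (basis ((a + b - m) # m # r)))"
    using lr by (intro sum.cong refl) (simp add: Tcyc_basis w)
  also have "\<dots> = rho (Tcyc l q (Suc n) (basis w))"
    using len by (simp add: Tcyc_basis linD(2)[OF lin_rho] rho_basis scal_sum w)
  finally show "Tcyc l q (Suc n) (rho (basis w)) = rho (Tcyc l q (Suc n) (basis w))" .
qed


lemma bounds_iff: "g \<in> bounds l q n \<longleftrightarrow> (\<exists>h\<in>tens (Suc n). \<exists>r\<in>relW l q n. g = bdry l q (Suc n) h + r)"
  by (simp add: bounds_def)

lemma main_pos:
  assumes z: "z \<in> tens (Suc m)" and zc: "bdry l q (Suc m) z \<in> relW l q m"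
  shows "z - scal (z (replicate (Suc (Suc m)) 0)) (basis (replicate (Suc (Suc m)) 0)) \<in> bounds l q (Suc m)"
proof -
  define y where "y = Einv z"
  have y: "y \<in> tens (Suc m)" using z by (simp add: y_def)
  have fy: "fs y" by (rule tens_fs[OF y])
  have by_: "bdry l q (Suc m) y \<in> relW l q m"
    unfolding y_def using Einv_bdry[OF z, of l q] Einv_relW[OF zc] by simp
  then obtain g1 g2 where g: "g1 \<in> tens m" "g2 \<in> tens m"
    and bye: "bdry l q (Suc m) y = (g1 - Tcyc l q m g1) + (g2 - tau l q m g2)"
    unfolding relW_iff tau_def by blast
  have fg: "fs g1" "fs g2" "fs (Tcyc l q m g1)" "fs (tau l q m g2)"
    using g tens_fs[OF Tcyc_tens[OF g(1)]] tens_fs[OF tau_tens[OF g(2)]] by (simp_all add: tens_fs)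
  define h where "h = Nm l q m g1 + g2"
  have h: "h \<in> tens m" using g by (simp add: h_def)
  have fNg1: "fs (Nm l q m g1)" using tens_fs[OF Nm_tens[OF g(1)]] .
  have Nb: "Nm l q m (bdry l q (Suc m) y) = h - Tcyc l q m h"
  proof -
    have "Nm l q m (bdry l q (Suc m) y) = (Nm l q m g1 - Nm l q m (Tcyc l q m g1)) + (Nm l q m g2 - Nm l q m (tau l q m g2))"
      unfolding bye using fg by (simp add: linD(1)[OF lin_Nm] lin_diff[OF lin_Nm])
    also have "\<dots> = (Nm l q m g1 - Tcyc l q m (Nm l q m g1)) + (g2 - Tcyc l q m g2)"
      using fg by (simp add: Nm_T Nm_tel2)
    also have "\<dots> = h - Tcyc l q m h"
      unfolding h_def using fNg1 fg by (simp add: linD(1)[OF lin_Tcyc] algebra_simps)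
    finally show ?thesis .
  qed
  define Ny where "Ny = Nm l q (Suc m) y"
  have Ny: "Ny \<in> tens (Suc m)" using y by (simp add: Ny_def)
  have J1e: "bdry l q (Suc (Suc m)) (sig Ny) + sig (bp l q (Suc m) Ny) = E0 Ny + rho (Ny - tau l q (Suc m) Ny)"
    by (rule J1[OF Ny])
  have e1: "Ny - tau l q (Suc m) Ny = y - Tcyc l q (Suc m) y" unfolding Ny_def by (rule Nm_tel1[OF fy])
  have e2: "rho (y - Tcyc l q (Suc m) y) = rho y - Tcyc l q (Suc m) (rho y)"
    using fy tens_fs[OF Tcyc_tens[OF y]] by (simp add: lin_diff[OF lin_rho] Trho[OF y])
  have e3: "sig (bp l q (Suc m) Ny) = sig h - Tcyc l q (Suc m) (sig h)"
  proof -
    have "bp l q (Suc m) Ny = h - Tcyc l q m h" unfolding Ny_def bp_Nm[OF y] Nb ..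
    then show ?thesis using tens_fs[OF h] tens_fs[OF Tcyc_tens[OF h]] by (simp add: lin_diff[OF lin_sig] Tsig[OF h])
  qed
  define r where "r = (E0 Ny - Etot y) + (rho y - Tcyc l q (Suc m) (rho y)) - (sig h - Tcyc l q (Suc m) (sig h))"
  have r: "r \<in> relW l q (Suc m)"
  proof -
    have a: "E0 Ny - Etot y \<in> relW l q (Suc m)" unfolding Ny_def by (rule J3[OF y])
    have b: "rho y - Tcyc l q (Suc m) (rho y) \<in> relW l q (Suc m)" by (rule relW_T) (simp add: y)
    have c: "sig h - Tcyc l q (Suc m) (sig h) \<in> relW l q (Suc m)" by (rule relW_T) (simp add: h)
    show ?thesis unfolding r_def by (rule relW_diff[OF relW_add[OF a b] c])
  qed
  have "bdry l q (Suc (Suc m)) (sig Ny) = Etot y + r"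
    using J1e unfolding e1 e2 e3 r_def by (simp add: algebra_simps)
  then have "Etot y = bdry l q (Suc (Suc m)) (sig Ny) + (- r)" by (simp add: algebra_simps)
  moreover have "Etot y = z - scal (z (replicate (Suc (Suc m)) 0)) (basis (replicate (Suc (Suc m)) 0))"
    unfolding y_def by (rule Etot_Einv[OF z])
  ultimately show ?thesis unfolding bounds_iff using Ny relW_uminus[OF r]
    by (intro bexI[of _ "sig Ny"] bexI[of _ "- r"]) auto
qed


lemma eval_lemma:
  assumes F: "lin F" and f: "f \<in> tens n"
    and b: "\<And>w. length w = Suc n \<Longrightarrow> F (basis w) x = (if w = x then 1 else 0)"
  shows "F f x = f x"
proof -
  have fin: "finite (supp f)" using tens_fs[OF f] by (simp add: fs_def supp_def)
  have "F f x = (\<Sum>w\<in>supp f. f w * F (basis w) x)"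
    by (simp add: lin_rep[OF F tens_fs[OF f]] sum_fun_apply scal_apply)
  also have "\<dots> = (\<Sum>w\<in>supp f. f w * (if w = x then 1 else 0))"
    using tens_len[OF f] b by (intro sum.cong refl) auto
  also have "\<dots> = (if x \<in> supp f then f x else 0)"
    using fin by (simp add: if_distrib sum.delta' cong: if_cong)
  also have "\<dots> = f x" by (auto simp: supp_def)
  finally show ?thesis .
qed

lemma eval0_lemma:
  assumes F: "lin F" and f: "f \<in> tens n"
    and b: "\<And>w. length w = Suc n \<Longrightarrow> F (basis w) x = 0"
  shows "F f x = 0"
proof -
  have "F f x = (\<Sum>w\<in>supp f. f w * F (basis w) x)"
    by (simp add: lin_rep[OF F tens_fs[OF f]] sum_fun_apply scal_apply)
  also have "\<dots> = 0" using tens_len[OF f] b by (intro sum.neutral) auto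
  finally show ?thesis .
qed

abbreviation zw :: "nat \<Rightarrow> nat list" where "zw k \<equiv> replicate k 0"

declare replicate_Suc[simp del]

lemma sum_list_zw[simp]: "sum_list (zw k) = 0"
  by (induction k) (auto simp: replicate_Suc)

lemma rotr_zw: "rotr (zw (Suc n)) = zw (Suc n)"
proof -
  have "zw (Suc n) = zw n @ [0]" by (simp add: replicate_Suc replicate_append_same)
  then show ?thesis by (simp add: replicate_Suc)
qed

lemma cc_zw: "cc l q (zw (Suc n)) = 1"
  by (simp add: cc_def)

lemma cyc_zw: "cyc l q n (basis (zw (Suc n))) = basis (zw (Suc n))"
  by (simp add: cyc_basis rotr_zw cc_zw)

lemma rotr_eq_zw: "length w = Suc n \<Longrightarrow> rotr w = zw (Suc n) \<Longrightarrow> w = zw (Suc n)"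
proof -
  assume a: "length w = Suc n" "rotr w = zw (Suc n)"
  have "w \<noteq> []" using a by auto
  then have "sum_list w = sum_list (rotr w)" by simp
  also have "\<dots> = 0" using a by simp
  finally show ?thesis using replicate_of_sum0[OF a(1)] by simp
qed

lemma relW_zero_odd:
  assumes "odd n"
  shows "scal c (basis (zw (Suc n))) \<in> relW l q n"
proof -
  define f2 where "f2 = scal (c / 2) (basis (zw (Suc n)))"
  have "f2 - scal ((-1) ^ n) (cyc l q n f2) = f2 + f2"
    using assms by (simp add: f2_def cyc_scal cyc_zw scal_m1)
  also have "\<dots> = scal c (basis (zw (Suc n)))" by (simp add: f2_def scal_add_left[symmetric])
  finally have e: "scal c (basis (zw (Suc n))) = (0 - Tcyc l q n 0) + (f2 - scal ((-1) ^ n) (cyc l q n f2))"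
    by (simp add: lin_zero[OF lin_Tcyc])
  show ?thesis unfolding relW_iff e by (intro bexI[of _ 0] bexI[of _ f2]) (auto simp: f2_def)
qed

lemma relW_zero_val:
  assumes "even n" and g: "g \<in> relW l q n"
  shows "g (zw (Suc n)) = 0"
proof -
  obtain f1 f2 where f: "f1 \<in> tens n" "f2 \<in> tens n"
    and ge: "g = (f1 - Tcyc l q n f1) + (f2 - scal ((-1) ^ n) (cyc l q n f2))"
    using g unfolding relW_iff by blast
  have a: "(\<lambda>f. f - Tcyc l q n f) f1 (zw (Suc n)) = 0"
  proof (rule eval0_lemma[OF _ f(1)])
    show "lin (\<lambda>f. f - Tcyc l q n f)" by (rule lin_diffop) simp_all
    fix w :: "nat list" assume len: "length w = Suc n"
    have T: "Tcyc l q n (basis w) = scal (kap l q (sum_list w)) (basis w)" by (rule Tcyc_basis[OF len])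
    show "(basis w - Tcyc l q n (basis w)) (zw (Suc n)) = 0"
      unfolding T by (cases "w = zw (Suc n)") (simp_all add: scal_apply basis_apply kap_def)
  qed
  have b: "(\<lambda>f. f - cyc l q n f) f2 (zw (Suc n)) = 0"
  proof (rule eval0_lemma[OF _ f(2)])
    show "lin (\<lambda>f. f - cyc l q n f)" by (rule lin_diffop) simp_all
    fix w :: "nat list" assume len: "length w = Suc n"
    show "(basis w - cyc l q n (basis w)) (zw (Suc n)) = 0"
    proof (cases "w = zw (Suc n)")
      case True then show ?thesis by (simp add: cyc_zw)
    next
      case False
      then have "rotr w \<noteq> zw (Suc n)" using rotr_eq_zw[OF len] by blast
      then show ?thesis using False len by (simp add: cyc_basis scal_apply basis_apply)
    qed
  qed
  show ?thesis using a b assms(1) unfolding ge by simp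
qed

lemma alt_sum: "(\<Sum>j<2 * k. (-1::complex) ^ j) = 0"
  by (induction k) (simp_all add: sum.lessThan_Suc)

lemma mrg_zw: "Suc j < k \<Longrightarrow> mrg j (zw k) = zw (k - 1)"
proof -
  assume a: "Suc j < k"
  have "length (mrg j (zw k)) = k - 1" using a by (simp add: length_mrg)
  moreover have "sum_list (mrg j (zw k)) = 0" using a by (simp add: sum_list_mrg)
  ultimately show ?thesis using replicate_of_sum0 by blast
qed

lemma bdry_zero_val:
  assumes "even n" and h: "h \<in> tens (Suc n)"
  shows "bdry l q (Suc n) h (zw (Suc n)) = 0"
proof (rule eval0_lemma[OF lin_bdry h])
  fix w :: "nat list" assume len: "length w = Suc (Suc n)"
  show "bdry l q (Suc n) (basis w) (zw (Suc n)) = 0"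
  proof (cases "w = zw (Suc (Suc n))")
    case True
    have "bdry l q (Suc n) (basis w) = (\<Sum>j\<le>Suc n. scal ((-1) ^ j) (basis (zw (Suc n))))"
      unfolding bdry_Dp
    proof (intro sum.cong refl)
      fix j assume "j \<in> {..Suc n}"
      then have j: "j \<le> Suc n" by simp
      show "Dp l q (Suc n) j (basis w) = scal ((-1) ^ j) (basis (zw (Suc n)))"
      proof (cases "j < Suc n")
        case True then show ?thesis using \<open>w = _\<close> by (simp add: Dp_basis_lt mrg_zw)
      next
        case False
        then have "j = Suc n" using j by simp
        then show ?thesis using \<open>w = _\<close> len by (simp add: Dp_basis_eq rotr_zw cc_zw mrg_zw)
      qed
    qed
    also have "\<dots> = scal (\<Sum>j\<le>Suc n. (-1) ^ j) (basis (zw (Suc n)))" by (rule scal_sum_left[symmetric])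
    also have "(\<Sum>j\<le>Suc n. (-1::complex) ^ j) = 0"
    proof -
      obtain t where "n = 2 * t" using assms(1) by (auto elim: evenE)
      then have "{..Suc n} = {..<2 * Suc t}" by auto
      then show ?thesis by (simp add: alt_sum)
    qed
    finally show ?thesis by simp
  next
    case False
    then have "sum_list w \<noteq> 0" using replicate_of_sum0[OF len] by blast
    show ?thesis
    proof (rule ccontr)
      assume "bdry l q (Suc n) (basis w) (zw (Suc n)) \<noteq> 0"
      then have "sum_list (zw (Suc n)) = sum_list w" by (rule deg_bdry[OF len])
      then show False using \<open>sum_list w \<noteq> 0\<close> by simp
    qed
  qed
qed

lemma bounds_zero_val:
  assumes "even n" "g \<in> bounds l q n"
  shows "g (zw (Suc n)) = 0"
  using assms bdry_zero_val relW_zero_val unfolding bounds_iff by fastforce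

lemma deg0_scal:
  assumes g: "g \<in> tens m" and d: "\<And>v. g v \<noteq> 0 \<Longrightarrow> sum_list v = 0"
  shows "g = scal (g (zw (Suc m))) (basis (zw (Suc m)))"
proof
  fix v show "g v = scal (g (zw (Suc m))) (basis (zw (Suc m))) v"
  proof (cases "g v = 0")
    case True
    then show ?thesis by (auto simp: scal_apply basis_def)
  next
    case False
    then have "length v = Suc m" using g by (simp add: tens_iff)
    then have "v = zw (Suc m)" using d[OF False] replicate_of_sum0 by blast
    then show ?thesis by (simp add: scal_apply basis_def)
  qed
qed

lemma zw_cycle:
  assumes "odd m"
  shows "bdry l q (Suc m) (basis (zw (Suc (Suc m)))) \<in> relW l q m"
proof -
  let ?g = "bdry l q (Suc m) (basis (zw (Suc (Suc m))))"
  have g: "?g \<in> tens m" by simp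
  have "?g = scal (?g (zw (Suc m))) (basis (zw (Suc m)))"
    by (rule deg0_scal[OF g]) (drule deg_bdry[rotated], auto)
  also have "\<dots> \<in> relW l q m" by (rule relW_zero_odd[OF assms])
  finally show ?thesis .
qed


lemma bounds_add: "g \<in> bounds l q n \<Longrightarrow> g' \<in> bounds l q n \<Longrightarrow> g + g' \<in> bounds l q n"
proof -
  assume "g \<in> bounds l q n" "g' \<in> bounds l q n"
  then obtain h r h' r' where h: "h \<in> tens (Suc n)" "h' \<in> tens (Suc n)" and r: "r \<in> relW l q n" "r' \<in> relW l q n"
    and g: "g = bdry l q (Suc n) h + r" "g' = bdry l q (Suc n) h' + r'" unfolding bounds_iff by blast
  have "g + g' = bdry l q (Suc n) (h + h') + (r + r')"
    unfolding g using h by (simp add: linD(1)[OF lin_bdry] tens_fs algebra_simps)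
  then show ?thesis unfolding bounds_iff using h r by (intro bexI[of _ "h + h'"] bexI[of _ "r + r'"]) (auto intro: relW_add)
qed

lemma bounds_scal: "g \<in> bounds l q n \<Longrightarrow> scal c g \<in> bounds l q n"
proof -
  assume "g \<in> bounds l q n"
  then obtain h r where h: "h \<in> tens (Suc n)" and r: "r \<in> relW l q n"
    and g: "g = bdry l q (Suc n) h + r" unfolding bounds_iff by blast
  have "scal c g = bdry l q (Suc n) (scal c h) + scal c r"
    unfolding g using h by (simp add: linD(2)[OF lin_bdry] tens_fs scal_add)
  then show ?thesis unfolding bounds_iff using h r by (intro bexI[of _ "scal c h"] bexI[of _ "scal c r"]) (auto intro: relW_scal)
qed

lemma bounds_0[simp]: "0 \<in> bounds l q n"
  unfolding bounds_iff by (intro bexI[of _ 0]) (auto simp: lin_zero[OF lin_bdry])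

lemma bounds_sum: "(\<And>a. a \<in> A \<Longrightarrow> g a \<in> bounds l q n) \<Longrightarrow> (\<Sum>a\<in>A. g a) \<in> bounds l q n"
  by (induction A rule: infinite_finite_induct) (auto intro: bounds_add)

lemma bounds_span: "fs f \<Longrightarrow> (\<And>w. w \<in> supp f \<Longrightarrow> basis w \<in> bounds l q n) \<Longrightarrow> f \<in> bounds l q n"
  by (subst decomp, assumption) (intro bounds_sum bounds_scal, auto)

lemma bounds_relW: "g \<in> bounds l q n \<Longrightarrow> r \<in> relW l q n \<Longrightarrow> g + r \<in> bounds l q n"
proof -
  assume "g \<in> bounds l q n" "r \<in> relW l q n"
  then obtain h r' where h: "h \<in> tens (Suc n)" and r: "r' \<in> relW l q n"
    and g: "g = bdry l q (Suc n) h + r'" unfolding bounds_iff by blast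
  have "g + r = bdry l q (Suc n) h + (r' + r)" unfolding g by (simp add: algebra_simps)
  then show ?thesis unfolding bounds_iff using h r \<open>r \<in> relW l q n\<close> by (intro bexI[of _ h] bexI[of _ "r' + r"]) (auto intro: relW_add)
qed

lemma bdry1_basis: "bdry l q (Suc 0) (basis [u, v]) = scal (1 - cc l q [u, v]) (basis [u + v])"
proof -
  have "bdry l q (Suc 0) (basis [u, v]) = Dp l q (Suc 0) 0 (basis [u, v]) + Dp l q (Suc 0) (Suc 0) (basis [u, v])"
    by (simp add: bdry_Dp)
  also have "\<dots> = basis [u + v] + scal (- cc l q [u, v]) (basis [v + u])"
    by (simp add: Dp_basis_lt Dp_basis_eq mrg_def rotr_def)
  also have "\<dots> = scal (1 - cc l q [u, v]) (basis [u + v])"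
    by (auto simp: fun_eq_iff scal_apply algebra_simps add.commute)
  finally show ?thesis .
qed

lemma cyc0_basis: "cyc l q 0 (basis [a]) = scal ((l * q ^ (a - 1)) ^ a) (basis [a])"
  by (simp add: cyc_basis cc_def rotr_def)

lemma bounds0_val:
  assumes good: "\<And>v. v \<le> S \<Longrightarrow> (l * q ^ (S - 1)) ^ v = 1" and g: "g \<in> bounds l q 0"
  shows "g [S] = 0"
proof -
  obtain h r where h: "h \<in> tens (Suc 0)" and r: "r \<in> relW l q 0"
    and ge: "g = bdry l q (Suc 0) h + r" using g unfolding bounds_iff by blast
  have a: "bdry l q (Suc 0) h [S] = 0"
  proof (rule eval0_lemma[OF lin_bdry h])
    fix w :: "nat list" assume "length w = Suc (Suc 0)"
    then obtain u v where w: "w = [u, v]" by (cases w; cases "tl w") auto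
    show "bdry l q (Suc 0) (basis w) [S] = 0"
    proof (cases "u + v = S")
      case True
      then have "cc l q [u, v] = 1" using good[of v] by (simp add: cc_def)
      then show ?thesis by (simp add: w bdry1_basis)
    next
      case False then show ?thesis by (simp add: w bdry1_basis scal_apply basis_apply)
    qed
  qed
  obtain f1 f2 where f: "f1 \<in> tens 0" "f2 \<in> tens 0"
    and re: "r = (f1 - Tcyc l q 0 f1) + (f2 - scal ((-1) ^ 0) (cyc l q 0 f2))"
    using r unfolding relW_iff by blast
  have cb: "(basis w - cyc l q 0 (basis w)) [S] = 0" if lw: "length w = Suc 0" for w
  proof -
    obtain a where w: "w = [a]" using lw by (auto simp: length_Suc_conv)
    show ?thesis
    proof (cases "a = S")
      case True then show ?thesis using good[of S] by (simp add: w cyc0_basis scal_apply basis_apply)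
    next
      case False then show ?thesis by (simp add: w cyc0_basis scal_apply basis_apply)
    qed
  qed
  have b1: "(\<lambda>f. f - cyc l q 0 f) f1 [S] = 0"
  proof (rule eval0_lemma[OF _ f(1)])
    show "lin (\<lambda>f. f - cyc l q 0 f)" by (rule lin_diffop) simp_all
    fix w :: "nat list" assume "length w = Suc 0"
    then show "(basis w - cyc l q 0 (basis w)) [S] = 0" by (rule cb)
  qed
  have b2: "(\<lambda>f. f - cyc l q 0 f) f2 [S] = 0"
  proof (rule eval0_lemma[OF _ f(2)])
    show "lin (\<lambda>f. f - cyc l q 0 f)" by (rule lin_diffop) simp_all
    fix w :: "nat list" assume "length w = Suc 0"
    then show "(basis w - cyc l q 0 (basis w)) [S] = 0" by (rule cb)
  qed
  have T0: "Tcyc l q 0 = cyc l q 0" by (simp add: Tcyc_def)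
  show ?thesis using a b1 b2 unfolding ge re T0 by simp
qed

lemma basis_bounds0:
  assumes a: "1 \<le> a" and ne: "l * q ^ (a - 1) \<noteq> 1"
  shows "basis [a] \<in> bounds l q 0"
proof -
  have c: "cc l q [a - Suc 0, Suc 0] = l * q ^ (a - Suc 0)" using a by (simp add: cc_def)
  have e: "Suc (a - Suc 0) = a" using a by simp
  define h where "h = scal (inverse (1 - l * q ^ (a - 1))) (basis [a - 1, 1])"
  have "bdry l q (Suc 0) h = scal (inverse (1 - l * q ^ (a - 1)) * (1 - l * q ^ (a - 1))) (basis [a])"
    unfolding h_def by (simp add: linD(2)[OF lin_bdry] bdry1_basis c e scal_scal)
  also have "\<dots> = basis [a]" using ne by simp
  finally have "basis [a] = bdry l q (Suc 0) h + 0" by simp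
  then show ?thesis unfolding bounds_iff by (intro bexI[of _ h] bexI[of _ 0]) (auto simp: h_def)
qed

lemma q_inj:
  assumes q0: "q \<noteq> 0" and nr: "\<forall>k::nat. k > 0 \<longrightarrow> q ^ k \<noteq> 1" and e: "q ^ i = (q::complex) ^ j"
  shows "i = j"
proof (rule ccontr)
  assume "i \<noteq> j"
  then consider "i < j" | "j < i" by linarith
  then show False
  proof cases
    case 1
    have "q ^ j = q ^ i * q ^ (j - i)" using 1 by (simp add: power_add[symmetric])
    then have "q ^ (j - i) = 1" using e q0 by simp
    then show False using nr 1 by auto
  next
    case 2
    have "q ^ i = q ^ j * q ^ (i - j)" using 2 by (simp add: power_add[symmetric])
    then have "q ^ (i - j) = 1" using e q0 by simp
    then show False using nr 2 by auto
  qed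
qed


lemma odd_case: "hc_basis l q (2 * n + 1) []"
proof -
  define m where "m = 2 * n"
  have om: "odd (Suc m)" by (simp add: m_def)
  have e: "2 * n + 1 = Suc m" by (simp add: m_def)
  have span: "z \<in> bounds l q (Suc m)" if z: "z \<in> cycles l q (Suc m)" for z
  proof -
    have zt: "z \<in> tens (Suc m)" and zc: "bdry l q (Suc m) z \<in> relW l q m" using z by (simp_all add: cycles_def)
    have a: "z - scal (z (zw (Suc (Suc m)))) (basis (zw (Suc (Suc m)))) \<in> bounds l q (Suc m)"
      by (rule main_pos[OF zt zc])
    have b: "scal (z (zw (Suc (Suc m)))) (basis (zw (Suc (Suc m)))) \<in> relW l q (Suc m)"
      by (rule relW_zero_odd[OF om])
    show ?thesis using bounds_relW[OF a b] by simp
  qed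
  show ?thesis unfolding hc_basis_def e using span by auto
qed

lemma even_case: "hc_basis l q (2 * n + 2) [basis (replicate (2 * n + 3) 0)]"
proof -
  define m where "m = 2 * n + 1"
  have om: "odd m" by (simp add: m_def)
  have em: "even (Suc m)" by (simp add: m_def)
  have e: "2 * n + 2 = Suc m" "2 * n + 3 = Suc (Suc m)" by (simp_all add: m_def)
  have mem: "basis (zw (Suc (Suc m))) \<in> cycles l q (Suc m)"
    using zw_cycle[OF om, of l q] by (simp add: cycles_def)
  have ind: "c 0 = 0" if "scal (c 0) (basis (zw (Suc (Suc m)))) \<in> bounds l q (Suc m)" for c :: "nat \<Rightarrow> complex"
    using bounds_zero_val[OF em that] by (simp add: scal_apply basis_apply)
  have span: "\<exists>c. z - scal (c (0::nat)) (basis (zw (Suc (Suc m)))) \<in> bounds l q (Suc m)"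
    if "z \<in> cycles l q (Suc m)" for z
  proof -
    have "z - scal (z (zw (Suc (Suc m)))) (basis (zw (Suc (Suc m)))) \<in> bounds l q (Suc m)"
      using that main_pos[of z m l q] by (simp add: cycles_def)
    then show ?thesis by (intro exI[of _ "\<lambda>_. z (zw (Suc (Suc m)))"]) simp
  qed
  show ?thesis unfolding hc_basis_def e using mem ind span by auto
qed

lemma inv_of_prod: "l * x = 1 \<Longrightarrow> l = inverse (x :: complex)"
  by (metis inverse_unique mult.commute)

lemma zero_span:
  assumes z: "z \<in> tens 0" and E: "\<And>a. z [a] \<noteq> 0 \<Longrightarrow> basis [a] \<in> bounds l q 0"
  shows "z \<in> bounds l q 0"
proof (rule bounds_span[OF tens_fs[OF z]])
  fix w assume w: "w \<in> supp z"
  then have "length w = Suc 0" using tens_len[OF z] by simp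
  then obtain a where wa: "w = [a]" by (auto simp: length_Suc_conv)
  have nz: "z [a] \<noteq> 0" using w wa by (simp add: supp_def)
  show "basis w \<in> bounds l q 0" using E[OF nz] wa by simp
qed

lemma good0: "v \<le> 0 \<Longrightarrow> (l * q ^ (0 - 1)) ^ v = 1" by simp

theorem mainTheorem7:
  fixes q l :: complex
  assumes "q \<noteq> 0" and "\<forall>k::nat. k > 0 \<longrightarrow> q ^ k \<noteq> 1" and "l \<noteq> 0"
  shows "(\<forall>n::nat. hc_basis l q (2 * n + 1) [])
       \<and> (\<forall>n::nat. hc_basis l q (2 * n + 2) [basis (replicate (2 * n + 3) 0)])
       \<and> ((\<forall>N::nat. l \<noteq> inverse (q ^ N)) \<longrightarrow> hc_basis l q 0 [basis [0]])
       \<and> (\<forall>N::nat. l = inverse (q ^ N) \<longrightarrow> hc_basis l q 0 [basis [0], basis [N + 1]])"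
proof (intro conjI allI impI)
  fix n show "hc_basis l q (2 * n + 1) []" by (rule odd_case)
next
  fix n show "hc_basis l q (2 * n + 2) [basis (replicate (2 * n + 3) 0)]" by (rule even_case)
next
  assume ns: "\<forall>N::nat. l \<noteq> inverse (q ^ N)"
  have c0: "cycles l q 0 = tens 0" by (simp add: cycles_def)
  have ind: "c 0 = 0" if "scal (c 0) (basis [0]) \<in> bounds l q 0" for c :: "nat \<Rightarrow> complex"
    using bounds0_val[OF good0 that] by (simp add: scal_apply basis_apply)
  have span: "z - scal (z [0]) (basis [0]) \<in> bounds l q 0" if z: "z \<in> tens 0" for z
  proof (rule zero_span)
    show "z - scal (z [0]) (basis [0]) \<in> tens 0" using z by simp
    fix a assume nz: "(z - scal (z [0]) (basis [0])) [a] \<noteq> 0"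
    then have a: "a \<noteq> 0" by (cases "a = 0") (auto simp: scal_apply basis_apply)
    have "l * q ^ (a - 1) \<noteq> 1"
    proof
      assume "l * q ^ (a - 1) = 1"
      then have "l = inverse (q ^ (a - 1))" by (rule inv_of_prod)
      then show False using ns by blast
    qed
    then show "basis [a] \<in> bounds l q 0" using a by (intro basis_bounds0) auto
  qed
  have span': "\<exists>c. z - scal (c (0::nat)) (basis [0]) \<in> bounds l q 0" if "z \<in> tens 0" for z
    using span[OF that] by (intro exI[of _ "\<lambda>_. z [0]"]) simp
  show "hc_basis l q 0 [basis [0]]" unfolding hc_basis_def c0 using ind span' by auto
next
  fix N assume lN: "l = inverse (q ^ N)"
  have qN: "q ^ N \<noteq> 0" using assms(1) by simp
  have lq: "l * q ^ N = 1" using lN qN by simp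
  have c0: "cycles l q 0 = tens 0" by (simp add: cycles_def)
  have goodN: "(l * q ^ (Suc N - 1)) ^ v = 1" for v using lq by simp
  have two: "(\<Sum>i<length [basis [0], basis [N + 1]]. scal (c i) ([basis [0], basis [N + 1]] ! i))
      = scal (c 0) (basis [0]) + scal (c 1) (basis [Suc N])" for c :: "nat \<Rightarrow> complex"
    by (simp add: numeral_2_eq_2)
  have ind: "\<forall>i<length [basis [0], basis [N + 1]]. c i = 0"
    if b: "(\<Sum>i<length [basis [0], basis [N + 1]]. scal (c i) ([basis [0], basis [N + 1]] ! i)) \<in> bounds l q 0"
    for c :: "nat \<Rightarrow> complex"
  proof -
    have b': "scal (c 0) (basis [0]) + scal (c 1) (basis [Suc N]) \<in> bounds l q 0" using b two by simp
    have "c 0 = 0" using bounds0_val[OF good0 b'] by (simp add: scal_apply basis_apply)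
    moreover have "c 1 = 0" using bounds0_val[OF goodN b'] by (simp add: scal_apply basis_apply)
    ultimately show ?thesis by (auto simp: less_Suc_eq numeral_2_eq_2)
  qed
  have span: "\<exists>c. z - (\<Sum>i<length [basis [0], basis [N + 1]]. scal (c i) ([basis [0], basis [N + 1]] ! i)) \<in> bounds l q 0"
    if z: "z \<in> tens 0" for z
  proof -
    define c where "c = (\<lambda>i::nat. if i = 0 then z [0] else z [Suc N])"
    have "z - (scal (c 0) (basis [0]) + scal (c 1) (basis [Suc N])) \<in> bounds l q 0"
    proof (rule zero_span)
      show "z - (scal (c 0) (basis [0]) + scal (c 1) (basis [Suc N])) \<in> tens 0" using z by simp
      fix a assume nz: "(z - (scal (c 0) (basis [0]) + scal (c 1) (basis [Suc N]))) [a] \<noteq> 0"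
      then have a: "a \<noteq> 0" "a \<noteq> Suc N"
        by (cases "a = 0"; cases "a = Suc N"; auto simp: scal_apply basis_apply c_def)+
      have "l * q ^ (a - 1) \<noteq> 1"
      proof
        assume h: "l * q ^ (a - 1) = 1"
        have "q ^ (a - 1) = q ^ N"
        proof -
          have "q ^ (a - 1) = q ^ (a - 1) * (l * q ^ N)" using lq by simp
          also have "\<dots> = (l * q ^ (a - 1)) * q ^ N" by (simp add: algebra_simps)
          also have "\<dots> = q ^ N" using h by simp
          finally show ?thesis .
        qed
        then have "a - 1 = N" by (rule q_inj[OF assms(1) assms(2)])
        then show False using a by simp
      qed
      then show "basis [a] \<in> bounds l q 0" using a by (intro basis_bounds0) auto
    qed
    then show ?thesis using two[of c] by auto
  qed
  show "hc_basis l q 0 [basis [0], basis [N + 1]]"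
    unfolding hc_basis_def c0 using ind span by auto
qed


end
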